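(* For every modulo predicate $\psi:\mathbb{N}^{\Sigma}\to\{0,1\}$, i.e. a predicate for which there exist $\mathbf{a}\in\mathbb{Z}^{\Sigma}$, $b\in\mathbb{Z}$ and $m\in\mathbb{Z}_{>0}$ with $\psi(\mathbf{x})=1\iff\mathbf{a}\cdot\mathbf{x}\equiv b\pmod m$, there exists a leaderless CRD that haltingly decides $\psi$ (under a weakly fair scheduler) whose halting runtime is $O(n)$.
   Context: CRN model: $\Pi=(\mathcal{S},\mathcal{R})$, finite species set, finite reaction set $\mathcal{R}\subset\mathbb{N}^{\mathcal{S}}\times\mathbb{N}^{\mathcal{S}}$; reactions $(\mathbf{r},\mathbf{p})$ with $\|\mathbf{r}\|_1\in\{1,2\}$, $\|\mathbf{r}\|_1\le\|\mathbf{p}\|_1$; every $\mathbf{r}$ with $1\le\|\mathbf{r}\|_1\le2$ has a nonempty set $\mathcal{R}(\mathbf{r})$ of reactions; void reactions ($\mathbf{r}=\mathbf{p}$) alone in their $\mathcal{R}(\mathbf{r})$; $\operatorname{NV}(\mathcal{R})$ non-void; finite density. Configurations $\mathbf{c}\in\mathbb{N}^{\mathcal{S}}$, $\|\mathbf{c}\|_1\ge1$; applicability $\mathbf{r}\le\mathbf{c}$, result $\mathbf{c}-\mathbf{r}+\mathbf{p}$; reachability $\stackrel{*}{\rightharpoonup}$; $\mathrm{halt}(Z)=\{\mathbf{c}\in Z:\mathbf{c}\stackrel{*}{\rightharpoonup}\mathbf{c}'\Rightarrow\mathbf{c}'=\mathbf{c}\}$. Weakly fair execution $\langle\mathbf{c}^t,\alpha^t\rangle$: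 every reaction applicable at step $t$ is later scheduled or becomes inapplicable. Halts into $Z$ at the first $t$ with $\mathbf{c}^t\in\mathrm{halt}(Z)$. CRD: input species $\Sigma\subset\mathcal{S}$, disjoint voters $\Upsilon_0,\Upsilon_1$, fuel $F\in\mathcal{S}\setminus\Sigma$, context $\mathbf{k}$ (leaderless: $\mathbf{k}=\mathbf{0}$); valid initial configurations agree with $\mathbf{k}$ off $\Sigma\cup\{F\}$ and have $\mathbf{c}^0(F)\ge1$; $\mathcal{D}_v=\{\mathbf{c}:\mathbf{c}(\Upsilon_v)>0,\mathbf{c}(\Upsilon_{1-v})=0\}$; $\Pi$ haltingly decides $\psi$ if for every $\mathbf{x}\in\mathbb{N}^{\Sigma}$, every weakly fair execution from every valid $\mathbf{c}^0$ with $\mathbf{c}^0|_\Sigma=\mathbf{x}$ halts into $\mathcal{D}_{\psi(\mathbf{x})}$. Runtime: stochastic scheduler with volume $\varphi=\Theta(n)$, $n=\|\mathbf{c}^0\|_1$; propensity $\pi_{\mathbf{c}}(\alpha)=\mathbf{c}(A)/|\mathcal{R}(\mathbf{r})|$ ($\mathbf{r}=A$), $\frac1\varphi\binom{\mathbf{c}(A)}2/|\mathcal{R}(\mathbf{r})|$ ($\mathbf{r}=2A$), $\frac1\varphi\mathbf{c}(A)\mathbf{c}(B)/|\mathcal{R}(\mathbf{r})|$ ($\mathbf{r}=A+B$); step time span $1/\pi_{\mathbf{c}}(\mathcal{R})$. $\tau(\eta,t,Q)$ = least $s>t$ with $\alpha^{s-1}\in Q$ or every reaction of $Q$ inapplicable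 at some step in $[t,s]$. Runtime policy $\varrho(\mathbf{c})\subseteq\operatorname{NV}(\mathcal{R})$; skipping policy $\sigma(t)\ge t$; rounds $t(0)=0$, $t_e(i)=\sigma(t(i))$, $\mathbf{e}^i=\mathbf{c}^{t_e(i)}$, $t(i+1)=\tau(\eta,t_e(i),\varrho(\mathbf{e}^i))$; $\operatorname{TC}^{\varrho}(\mathbf{c})$ = expected total time span of the steps before $\tau(\eta_r,0,\varrho(\mathbf{c}))$ of a stochastic execution $\eta_r$ from $\mathbf{c}$; $\operatorname{RT}_{\mathrm{halt}}^{\varrho,\sigma}(\eta)=\sum_{i<i^*}\operatorname{TC}^{\varrho}(\mathbf{e}^i)$ with $i^*=\min\{i:t(i)\ge t^*\}$, $t^*$ the halting step; halting runtime $\operatorname{RT}_{\mathrm{halt}}^{\Pi}(n)=\min_\varrho\max_{\eta,\sigma}\operatorname{RT}_{\mathrm{halt}}^{\varrho,\sigma}(\eta)$ over weakly fair executions from valid initial configurations of molecular count $n$ and all skipping policies. *)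

theory Defs
  imports Complex_Main "HOL-Library.Landau_Symbols" "HOL-Library.Extended_Nonnegative_Real"
begin

text \<open>Species are natural numbers; a vector in N^S is a function nat => nat
  vanishing outside the finite species set S.\<close>

type_synonym conf = "nat \<Rightarrow> nat"
type_synonym reaction = "conf \<times> conf"

definition supp_in :: "nat set \<Rightarrow> conf \<Rightarrow> bool" where
  "supp_in S c \<longleftrightarrow> (\<forall>s. s \<notin> S \<longrightarrow> c s = 0)"

definition csize :: "nat set \<Rightarrow> conf \<Rightarrow> nat" where
  "csize S c = (\<Sum>s\<in>S. c s)"

definition is_conf :: "nat set \<Rightarrow> conf \<Rightarrow> bool" where
  "is_conf S c \<longleftrightarrow> supp_in S c \<and> csize S c \<ge> 1"

definition Rof :: "reaction set \<Rightarrow> conf \<Rightarrow> reaction set" where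
  "Rof R r = {\<alpha> \<in> R. fst \<alpha> = r}"

definition NV :: "reaction set \<Rightarrow> reaction set" where
  "NV R = {\<alpha> \<in> R. fst \<alpha> \<noteq> snd \<alpha>}"

definition applicable :: "reaction \<Rightarrow> conf \<Rightarrow> bool" where
  "applicable \<alpha> c \<longleftrightarrow> (\<forall>s. fst \<alpha> s \<le> c s)"

definition apply_r :: "reaction \<Rightarrow> conf \<Rightarrow> conf" where
  "apply_r \<alpha> c = (\<lambda>s. c s - fst \<alpha> s + snd \<alpha> s)"

definition step :: "reaction set \<Rightarrow> conf \<Rightarrow> conf \<Rightarrow> bool" where
  "step R c c' \<longleftrightarrow> (\<exists>\<alpha>\<in>R. applicable \<alpha> c \<and> c' = apply_r \<alpha> c)"

definition reach :: "reaction set \<Rightarrow> conf \<Rightarrow> conf \<Rightarrow> bool" where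
  "reach R = (step R)\<^sup>*\<^sup>*"

definition halt :: "reaction set \<Rightarrow> conf set \<Rightarrow> conf set" where
  "halt R Z = {c \<in> Z. \<forall>c'. reach R c c' \<longrightarrow> c' = c}"

definition finite_density :: "nat set \<Rightarrow> reaction set \<Rightarrow> bool" where
  "finite_density S R \<longleftrightarrow>
     (\<exists>K::nat. \<forall>c0 c. is_conf S c0 \<and> reach R c0 c \<longrightarrow> csize S c \<le> K * csize S c0)"

definition crn :: "nat set \<Rightarrow> reaction set \<Rightarrow> bool" where
  "crn S R \<longleftrightarrow> finite S \<and> finite R \<and>
     (\<forall>(r, p)\<in>R. supp_in S r \<and> supp_in S p \<and> csize S r \<in> {1, 2} \<and> csize S r \<le> csize S p) \<and>
     (\<forall>r. supp_in S r \<and> 1 \<le> csize S r \<and> csize S r \<le> 2 \<longrightarrow> Rof R r \<noteq> {}) \<and>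
     (\<forall>(r, p)\<in>R. r = p \<longrightarrow> Rof R r = {(r, p)}) \<and>
     finite_density S R"

text \<open>Chemical reaction decider (species S, reactions R, input species Sig,
  voters Y0, Y1, fuel F); leaderless means context k = 0.\<close>
definition crd :: "nat set \<Rightarrow> reaction set \<Rightarrow> nat set \<Rightarrow> nat set \<Rightarrow> nat set \<Rightarrow> nat \<Rightarrow> bool" where
  "crd S R Sig Y0 Y1 F \<longleftrightarrow> crn S R \<and> Sig \<subseteq> S \<and> Y0 \<subseteq> S \<and> Y1 \<subseteq> S \<and> Y0 \<inter> Y1 = {} \<and>
     F \<in> S - Sig"

definition valid_init :: "nat set \<Rightarrow> nat set \<Rightarrow> nat \<Rightarrow> conf \<Rightarrow> bool" where
  "valid_init S Sig F c0 \<longleftrightarrow> is_conf S c0 \<and> (\<forall>s. s \<notin> Sig \<and> s \<noteq> F \<longrightarrow> c0 s = 0) \<and> c0 F \<ge> 1"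

definition restrict_to :: "nat set \<Rightarrow> conf \<Rightarrow> conf" where
  "restrict_to Sig c = (\<lambda>s. if s \<in> Sig then c s else 0)"

definition D :: "nat set \<Rightarrow> nat set \<Rightarrow> bool \<Rightarrow> conf set" where
  "D Y0 Y1 v = (let Yv = (if v then Y1 else Y0); Yo = (if v then Y0 else Y1) in
      {c. (\<Sum>s\<in>Yv. c s) > 0 \<and> (\<Sum>s\<in>Yo. c s) = 0})"

definition execution :: "reaction set \<Rightarrow> (nat \<Rightarrow> conf) \<Rightarrow> (nat \<Rightarrow> reaction) \<Rightarrow> bool" where
  "execution R cs as \<longleftrightarrow>
     (\<forall>t. as t \<in> R \<and> applicable (as t) (cs t) \<and> cs (Suc t) = apply_r (as t) (cs t))"

definition weakly_fair :: "reaction set \<Rightarrow> (nat \<Rightarrow> conf) \<Rightarrow> (nat \<Rightarrow> reaction) \<Rightarrow> bool" where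
  "weakly_fair R cs as \<longleftrightarrow>
     (\<forall>t. \<forall>\<alpha>\<in>R. applicable \<alpha> (cs t) \<longrightarrow> (\<exists>s\<ge>t. as s = \<alpha> \<or> \<not> applicable \<alpha> (cs s)))"

definition halts_into :: "reaction set \<Rightarrow> conf set \<Rightarrow> (nat \<Rightarrow> conf) \<Rightarrow> bool" where
  "halts_into R Z cs \<longleftrightarrow> (\<exists>t. cs t \<in> halt R Z)"

definition halting_decides ::
  "nat set \<Rightarrow> reaction set \<Rightarrow> nat set \<Rightarrow> nat set \<Rightarrow> nat set \<Rightarrow> nat \<Rightarrow> (conf \<Rightarrow> bool) \<Rightarrow> bool" where
  "halting_decides S R Sig Y0 Y1 F \<psi> \<longleftrightarrow>
     (\<forall>x. supp_in Sig x \<longrightarrow> (\<forall>c0 cs as.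
        valid_init S Sig F c0 \<and> restrict_to Sig c0 = x \<and> cs 0 = c0 \<and>
        execution R cs as \<and> weakly_fair R cs as \<longrightarrow> halts_into R (D Y0 Y1 (\<psi> x)) cs))"

definition modulo_predicate :: "nat set \<Rightarrow> (conf \<Rightarrow> bool) \<Rightarrow> bool" where
  "modulo_predicate Sig \<psi> \<longleftrightarrow>
     (\<exists>(a::nat \<Rightarrow> int) (b::int) (m::int). m > 0 \<and>
        (\<forall>x. supp_in Sig x \<longrightarrow> (\<psi> x \<longleftrightarrow> (\<Sum>s\<in>Sig. a s * int (x s)) mod m = b mod m)))"

definition propensity :: "real \<Rightarrow> nat set \<Rightarrow> reaction set \<Rightarrow> conf \<Rightarrow> reaction \<Rightarrow> real" where
  "propensity V S R c \<alpha> =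
     (if csize S (fst \<alpha>) = 1 then 1 else 1 / V) *
     (\<Prod>s\<in>S. real (c s choose fst \<alpha> s)) / real (card (Rof R (fst \<alpha>)))"

definition totprop :: "real \<Rightarrow> nat set \<Rightarrow> reaction set \<Rightarrow> conf \<Rightarrow> real" where
  "totprop V S R c = (\<Sum>\<alpha>\<in>R. propensity V S R c \<alpha>)"

definition stopcond :: "reaction set \<Rightarrow> (nat \<Rightarrow> conf) \<Rightarrow> (nat \<Rightarrow> reaction) \<Rightarrow> nat \<Rightarrow> nat \<Rightarrow> bool" where
  "stopcond Q cs as t s \<longleftrightarrow> t < s \<and>
     (as (s - 1) \<in> Q \<or> (\<forall>\<alpha>\<in>Q. \<exists>u. t \<le> u \<and> u \<le> s \<and> \<not> applicable \<alpha> (cs u)))"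

definition tau :: "reaction set \<Rightarrow> (nat \<Rightarrow> conf) \<Rightarrow> (nat \<Rightarrow> reaction) \<Rightarrow> nat \<Rightarrow> nat" where
  "tau Q cs as t = (LEAST s. stopcond Q cs as t s)"

fun path_conf :: "conf \<Rightarrow> reaction list \<Rightarrow> nat \<Rightarrow> conf" where
  "path_conf c xs 0 = c"
| "path_conf c xs (Suc i) = apply_r (xs ! i) (path_conf c xs i)"

definition path_prob :: "real \<Rightarrow> nat set \<Rightarrow> reaction set \<Rightarrow> conf \<Rightarrow> reaction list \<Rightarrow> real" where
  "path_prob V S R c xs =
     (\<Prod>i<length xs. propensity V S R (path_conf c xs i) (xs ! i) / totprop V S R (path_conf c xs i))"

text \<open>TC^rho(c): expected total time span of the steps t < tau(eta_r, 0, Q) of a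
  stochastic execution from c, Q = rho(c); written as the sum over t of the
  expectation of (time span of step t) * [t < tau].\<close>
definition TC :: "real \<Rightarrow> nat set \<Rightarrow> reaction set \<Rightarrow> (conf \<Rightarrow> reaction set) \<Rightarrow> conf \<Rightarrow> ennreal" where
  "TC V S R \<rho> c = (\<Sum>t. \<Sum>xs\<in>{xs. set xs \<subseteq> R \<and> length xs = t}.
      (if \<not> (\<exists>s. s \<le> t \<and> stopcond (\<rho> c) (path_conf c xs) (\<lambda>i. xs ! i) 0 s)
       then ennreal (path_prob V S R c xs) * ennreal (1 / totprop V S R (path_conf c xs t))
       else 0))"

primrec rounds :: "(nat \<Rightarrow> nat) \<Rightarrow> (nat \<Rightarrow> nat) \<Rightarrow> nat \<Rightarrow> nat" where
  "rounds f \<sigma> 0 = 0"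
| "rounds f \<sigma> (Suc i) = f (\<sigma> (rounds f \<sigma> i))"

definition halting_step :: "reaction set \<Rightarrow> conf set \<Rightarrow> (nat \<Rightarrow> conf) \<Rightarrow> enat" where
  "halting_step R Z cs = (if \<exists>t. cs t \<in> halt R Z then enat (LEAST t. cs t \<in> halt R Z) else \<infinity>)"

definition RT_exec ::
  "real \<Rightarrow> nat set \<Rightarrow> reaction set \<Rightarrow> (conf \<Rightarrow> reaction set) \<Rightarrow> (nat \<Rightarrow> nat) \<Rightarrow> conf set
   \<Rightarrow> (nat \<Rightarrow> conf) \<Rightarrow> (nat \<Rightarrow> reaction) \<Rightarrow> ennreal" where
  "RT_exec V S R \<rho> \<sigma> Z cs as =
     (let tr = rounds (\<lambda>te. tau (\<rho> (cs te)) cs as te) \<sigma> in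
      (\<Sum>i. if enat (tr i) < halting_step R Z cs then TC V S R \<rho> (cs (\<sigma> (tr i))) else 0))"

definition RT_halt ::
  "(nat \<Rightarrow> real) \<Rightarrow> nat set \<Rightarrow> reaction set \<Rightarrow> nat set \<Rightarrow> nat set \<Rightarrow> nat set \<Rightarrow> nat
   \<Rightarrow> (conf \<Rightarrow> bool) \<Rightarrow> nat \<Rightarrow> ennreal" where
  "RT_halt \<phi> S R Sig Y0 Y1 F \<psi> n =
     (INF \<rho>\<in>{\<rho>. \<forall>c. \<rho> c \<subseteq> NV R}.
        SUP (cs, as, \<sigma>)\<in>{(cs, as, \<sigma>). valid_init S Sig F (cs 0) \<and> csize S (cs 0) = n \<and>
               execution R cs as \<and> weakly_fair R cs as \<and> (\<forall>t. \<sigma> t \<ge> t)}.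
          RT_exec (\<phi> n) S R \<rho> \<sigma> (D Y0 Y1 (\<psi> (restrict_to Sig (cs 0)))) cs as)"

end

theory Submission
  imports Defs
begin



lemma prop_nonneg: "V > 0 \<Longrightarrow> 0 \<le> propensity V S R c \<alpha>"
  unfolding propensity_def by (auto intro!: divide_nonneg_nonneg mult_nonneg_nonneg prod_nonneg)

lemma prop_zero:
  assumes "finite S" "supp_in S (fst \<alpha>)" "\<not> applicable \<alpha> c"
  shows "propensity V S R c \<alpha> = 0"
proof -
  obtain s where s: "fst \<alpha> s > c s" using assms(3) unfolding applicable_def by (auto simp: not_le)
  then have "s \<in> S" using assms(2) unfolding supp_in_def by (metis gr_implies_not0)
  then have "(\<Prod>s\<in>S. real (c s choose fst \<alpha> s)) = 0"
    using s assms(1) by (intro prod_zero) (auto intro!: bexI[of _ s])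
  then show ?thesis unfolding propensity_def by simp
qed

lemma sum_lists_prod:
  fixes h :: "'a \<Rightarrow> real"
  assumes "finite A"
  shows "(\<Sum>xs\<in>{xs. set xs \<subseteq> A \<and> length xs = t}. \<Prod>i<t. h (xs ! i)) = (sum h A) ^ t"
proof (induction t)
  case 0
  have "{xs. set xs \<subseteq> A \<and> length xs = 0} = {[]}" by auto
  then show ?case by simp
next
  case (Suc t)
  let ?L = "\<lambda>t. {xs. set xs \<subseteq> A \<and> length xs = t}"
  have eq: "?L (Suc t) = (\<lambda>(a, xs). a # xs) ` (A \<times> ?L t)"
  proof
    show "?L (Suc t) \<subseteq> (\<lambda>(a, xs). a # xs) ` (A \<times> ?L t)"
    proof
      fix xs assume "xs \<in> ?L (Suc t)"
      then obtain y ys where "xs = y # ys" "y \<in> A" "ys \<in> ?L t" by (cases xs) auto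
      then show "xs \<in> (\<lambda>(a, xs). a # xs) ` (A \<times> ?L t)" by force
    qed
  qed auto
  have inj: "inj_on (\<lambda>(a, xs). a # xs) (A \<times> ?L t)" by (auto simp: inj_on_def)
  have "(\<Sum>xs\<in>?L (Suc t). \<Prod>i<Suc t. h (xs ! i))
      = (\<Sum>p\<in>A \<times> ?L t. \<Prod>i<Suc t. h ((fst p # snd p) ! i))"
    unfolding eq by (subst sum.reindex[OF inj]) (auto intro!: sum.cong simp: case_prod_beta)
  also have "\<dots> = (\<Sum>p\<in>A \<times> ?L t. h (fst p) * (\<Prod>i<t. h (snd p ! i)))"
    by (intro sum.cong refl, subst prod.lessThan_Suc_shift) simp
  also have "\<dots> = (\<Sum>a\<in>A. \<Sum>xs\<in>?L t. h a * (\<Prod>i<t. h (xs ! i)))"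
    by (subst sum.cartesian_product) (simp add: case_prod_beta)
  also have "\<dots> = (\<Sum>a\<in>A. h a * (sum h A) ^ t)"
    by (simp add: sum_distrib_left[symmetric] Suc.IH)
  also have "\<dots> = (sum h A) ^ Suc t" by (simp add: sum_distrib_right)
  finally show ?case .
qed

lemma apply_void: "applicable (r, r) c \<Longrightarrow> apply_r (r, r) c = c"
  unfolding applicable_def apply_r_def by auto

lemma path_const:
  "(\<forall>j<i. fst (xs!j) = snd (xs!j) \<and> applicable (xs!j) c) \<Longrightarrow> path_conf c xs i = c"
proof (induction i)
  case (Suc i)
  then have "path_conf c xs i = c" by auto
  moreover have "fst (xs!i) = snd (xs!i)" "applicable (xs!i) c" using Suc.prems by auto
  ultimately show ?case using apply_void[of "fst (xs!i)" c] by (cases "xs!i") auto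
qed simp




lemma TC_quiet:
  assumes "\<forall>\<alpha>\<in>\<rho> c. \<not> applicable \<alpha> c"
  shows "TC V S R \<rho> c = ennreal (1 / totprop V S R c)"
proof -
  let ?f = "\<lambda>t. \<Sum>xs\<in>{xs. set xs \<subseteq> R \<and> length xs = t}.
      (if \<not> (\<exists>s. s \<le> t \<and> stopcond (\<rho> c) (path_conf c xs) (\<lambda>i. xs ! i) 0 s)
       then ennreal (path_prob V S R c xs) * ennreal (1 / totprop V S R (path_conf c xs t))
       else 0)"
  have z: "?f t = 0" if "t \<noteq> 0" for t
  proof (intro sum.neutral ballI)
    fix xs assume "xs \<in> {xs. set xs \<subseteq> R \<and> length xs = t}"
    have "stopcond (\<rho> c) (path_conf c xs) (\<lambda>i. xs ! i) 0 1"
      unfolding stopcond_def using assms by (auto intro!: exI[of _ 0])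
    then show "(if \<not> (\<exists>s. s \<le> t \<and> stopcond (\<rho> c) (path_conf c xs) (\<lambda>i. xs ! i) 0 s)
       then ennreal (path_prob V S R c xs) * ennreal (1 / totprop V S R (path_conf c xs t))
       else 0) = 0" using that by auto
  qed
  have "TC V S R \<rho> c = (\<Sum>t. ?f t)" unfolding TC_def by simp
  also have "\<dots> = sum ?f {0}" by (rule suminf_finite) (use z in \<open>auto simp del: neq0_conv\<close>)
  also have "\<dots> = ennreal (1 / totprop V S R c)"
  proof -
    have "{xs. set xs \<subseteq> R \<and> length xs = 0} = {[]}" by auto
    moreover have "\<not> stopcond (\<rho> c) (path_conf c []) (\<lambda>i. [] ! i) 0 0" unfolding stopcond_def by simp
    ultimately show ?thesis by (simp add: path_prob_def)
  qed
  finally show ?thesis .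
qed

lemma TC_le:
  assumes V: "V > 0" and fS: "finite S" and fR: "finite R" and QR: "\<rho> c \<subseteq> R"
    and supp: "\<forall>\<alpha>\<in>R. supp_in S (fst \<alpha>)" and void: "\<forall>\<alpha>\<in>R - \<rho> c. fst \<alpha> = snd \<alpha>"
    and Ppos: "(\<Sum>\<alpha>\<in>\<rho> c. propensity V S R c \<alpha>) > 0"
  shows "TC V S R \<rho> c \<le> ennreal (1 / (\<Sum>\<alpha>\<in>\<rho> c. propensity V S R c \<alpha>))"
proof -
  define Q where "Q = \<rho> c"
  define P where "P = (\<Sum>\<alpha>\<in>Q. propensity V S R c \<alpha>)"
  define Pv where "Pv = (\<Sum>\<alpha>\<in>R - Q. propensity V S R c \<alpha>)"
  define T where "T = totprop V S R c"
  have P0: "P > 0" using Ppos unfolding P_def Q_def .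
  have Pv0: "Pv \<ge> 0" unfolding Pv_def by (intro sum_nonneg prop_nonneg[OF V])
  have T: "T = P + Pv" unfolding T_def totprop_def P_def Pv_def
    using sum.subset_diff[OF QR[folded Q_def] fR] by (simp add: add.commute)
  have T0: "T > 0" using T P0 Pv0 by simp
  define h where "h \<alpha> = (if \<alpha> \<in> R - Q then propensity V S R c \<alpha> / T else 0)" for \<alpha>
  define q where "q = Pv / T"
  have sumh: "sum h R = q" unfolding h_def q_def Pv_def
    by (simp add: sum.If_cases fR sum_divide_distrib Diff_eq Compl_eq)
  have q0: "0 \<le> q" "q < 1" unfolding q_def using Pv0 T0 T P0 by (auto simp: divide_simps)
  have h0: "0 \<le> h \<alpha>" for \<alpha> unfolding h_def using T0 prop_nonneg[OF V] by auto
  let ?L = "\<lambda>t. {xs. set xs \<subseteq> R \<and> length xs = t}"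
  let ?F = "\<lambda>t xs. (if \<not> (\<exists>s. s \<le> t \<and> stopcond (\<rho> c) (path_conf c xs) (\<lambda>i. xs ! i) 0 s)
       then ennreal (path_prob V S R c xs) * ennreal (1 / totprop V S R (path_conf c xs t))
       else 0)"
  have termle: "?F t xs \<le> ennreal ((\<Prod>i<t. h (xs ! i)) / T)" if xs: "xs \<in> ?L t" for t xs
  proof (cases "\<exists>s. s \<le> t \<and> stopcond (\<rho> c) (path_conf c xs) (\<lambda>i. xs ! i) 0 s")
    case True then show ?thesis by simp
  next
    case False
    have notQ: "xs ! i \<notin> Q" if "i < t" for i
    proof
      assume "xs ! i \<in> Q"
      then have "stopcond (\<rho> c) (path_conf c xs) (\<lambda>i. xs ! i) 0 (Suc i)"
        unfolding stopcond_def Q_def by simp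
      then show False using False that by (auto intro!: exI[of _ "Suc i"])
    qed
    have inR: "xs ! i \<in> R" if "i < t" for i using xs that nth_mem[of i xs] by auto
    show ?thesis
    proof (cases "\<forall>j<t. applicable (xs ! j) c")
      case True
      have pc: "path_conf c xs i = c" if "i \<le> t" for i
        using True that inR notQ void by (intro path_const) (auto simp: Q_def)
      have "path_prob V S R c xs = (\<Prod>i<t. h (xs ! i))"
        unfolding path_prob_def using xs
        by (intro prod.cong) (auto simp: pc h_def T_def notQ inR)
      then have "?F t xs = ennreal (\<Prod>i<t. h (xs ! i)) * ennreal (1 / T)"
        using False pc[of t] by (simp add: T_def)
      also have "\<dots> = ennreal ((\<Prod>i<t. h (xs ! i)) / T)"
        using T0 by (subst ennreal_mult''[symmetric]) (auto simp: divide_simps)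
      finally show ?thesis by simp
    next
      case nA: False
      define j where "j = (LEAST j. j < t \<and> \<not> applicable (xs ! j) c)"
      have j: "j < t" "\<not> applicable (xs ! j) c" using nA LeastI_ex[of "\<lambda>j. j < t \<and> \<not> applicable (xs ! j) c"]
        unfolding j_def by auto
      have jmin: "applicable (xs ! i) c" if "i < j" for i
        using not_less_Least[of i "\<lambda>j. j < t \<and> \<not> applicable (xs ! j) c"] that j(1) unfolding j_def[symmetric]
        by auto
      have pc: "path_conf c xs j = c"
        using jmin j inR notQ void by (intro path_const) (auto simp: Q_def)
      have "propensity V S R (path_conf c xs j) (xs ! j) = 0"
        unfolding pc using j inR supp fS by (intro prop_zero) auto
      then have "path_prob V S R c xs = 0" unfolding path_prob_def using j xs
        by (intro prod_zero) (auto intro!: bexI[of _ j])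
      then show ?thesis using False by simp
    qed
  qed
  have tle: "(\<Sum>xs\<in>?L t. ?F t xs) \<le> ennreal (q ^ t / T)" for t
  proof -
    have "(\<Sum>xs\<in>?L t. ?F t xs) \<le> (\<Sum>xs\<in>?L t. ennreal ((\<Prod>i<t. h (xs ! i)) / T))"
      by (intro sum_mono termle)
    also have "\<dots> = ennreal (\<Sum>xs\<in>?L t. (\<Prod>i<t. h (xs ! i)) / T)"
      using T0 h0 by (intro sum_ennreal divide_nonneg_pos prod_nonneg) auto
    also have "(\<Sum>xs\<in>?L t. (\<Prod>i<t. h (xs ! i)) / T) = q ^ t / T"
      by (simp add: sum_divide_distrib[symmetric] sum_lists_prod[OF fR] sumh)
    finally show ?thesis .
  qed
  have "TC V S R \<rho> c = (\<Sum>t. \<Sum>xs\<in>?L t. ?F t xs)" unfolding TC_def by simp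
  also have "\<dots> \<le> (\<Sum>t. ennreal (q ^ t / T))"
    by (intro suminf_le tle summableI)
  also have "\<dots> = ennreal (\<Sum>t. q ^ t / T)"
    using q0 T0 by (intro suminf_ennreal2) (auto intro!: summable_divide summable_geometric)
  also have "(\<Sum>t. q ^ t / T) = 1 / (1 - q) / T"
    using q0 by (intro sums_unique[symmetric] sums_divide geometric_sums) auto
  also have "\<dots> = 1 / P" using T0 T P0 unfolding q_def by (simp add: divide_simps)
  finally show ?thesis unfolding P_def Q_def .
qed




definition del :: "nat \<Rightarrow> conf" where "del x = (\<lambda>s. if s = x then 1 else 0)"
definition dd :: "nat \<Rightarrow> nat \<Rightarrow> conf" where "dd x y = (\<lambda>s. del x s + del y s)"
definition Qs :: "nat set \<Rightarrow> (nat \<Rightarrow> int) \<Rightarrow> conf \<Rightarrow> int" where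
  "Qs S w c = (\<Sum>s\<in>S. w s * int (c s))"

lemma Qs_apply:
  assumes "applicable \<alpha> c"
  shows "Qs S w (apply_r \<alpha> c) = Qs S w c - Qs S w (fst \<alpha>) + Qs S w (snd \<alpha>)"
proof -
  have eq: "int (apply_r \<alpha> c s) = int (c s) - int (fst \<alpha> s) + int (snd \<alpha> s)" for s
  proof -
    have le: "fst \<alpha> s \<le> c s" using assms unfolding applicable_def by auto
    show ?thesis unfolding apply_r_def by (simp only: of_nat_add of_nat_diff[OF le])
  qed
  have "Qs S w (apply_r \<alpha> c) = (\<Sum>s\<in>S. w s * int (c s) - w s * int (fst \<alpha> s) + w s * int (snd \<alpha> s))"
    unfolding Qs_def by (intro sum.cong refl) (simp only: eq algebra_simps)
  then show ?thesis unfolding Qs_def by (simp add: sum.distrib sum_subtractf)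
qed

lemma Qs_del: "finite S \<Longrightarrow> x \<in> S \<Longrightarrow> Qs S w (del x) = w x"
  unfolding Qs_def del_def by (simp add: if_distrib cong: if_cong)

lemma Qs_dd: "finite S \<Longrightarrow> x \<in> S \<Longrightarrow> y \<in> S \<Longrightarrow> Qs S w (dd x y) = w x + w y"
proof -
  assume a: "finite S" "x \<in> S" "y \<in> S"
  have "Qs S w (dd x y) = Qs S w (del x) + Qs S w (del y)"
    unfolding Qs_def dd_def by (simp add: sum.distrib algebra_simps)
  then show ?thesis using a by (simp add: Qs_del)
qed

lemma Qs_mono: "(\<forall>s. r s \<le> c s) \<Longrightarrow> (\<forall>s\<in>S. w s \<ge> 0) \<Longrightarrow> Qs S w r \<le> Qs S w c"
  unfolding Qs_def by (intro sum_mono mult_left_mono) auto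

lemma csize_Qs: "int (csize S c) = Qs S (\<lambda>_. 1) c"
  unfolding csize_def Qs_def by simp

lemma csize_del: "finite S \<Longrightarrow> x \<in> S \<Longrightarrow> csize S (del x) = 1"
  using Qs_del[of S x "\<lambda>_. 1"] csize_Qs[of S "del x"] by simp

lemma csize_dd: "finite S \<Longrightarrow> x \<in> S \<Longrightarrow> y \<in> S \<Longrightarrow> csize S (dd x y) = 2"
  using Qs_dd[of S x y "\<lambda>_. 1"] csize_Qs[of S "dd x y"] by simp

lemma supp_del: "x \<in> S \<Longrightarrow> supp_in S (del x)"
  unfolding supp_in_def del_def by auto

lemma supp_dd: "x \<in> S \<Longrightarrow> y \<in> S \<Longrightarrow> supp_in S (dd x y)"
  unfolding supp_in_def dd_def del_def by auto

lemma prod_choose_del: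
  assumes "finite S" "x \<in> S"
  shows "(\<Prod>s\<in>S. real (c s choose del x s)) = real (c x)"
proof -
  have "(\<Prod>s\<in>S. real (c s choose del x s)) = (\<Prod>s\<in>S. if s = x then real (c x) else 1)"
    by (intro prod.cong) (auto simp: del_def)
  then show ?thesis using assms by (simp add: prod.delta)
qed

lemma prod_choose_dd_ne:
  assumes "finite S" "x \<in> S" "y \<in> S" "x \<noteq> y"
  shows "(\<Prod>s\<in>S. real (c s choose dd x y s)) = real (c x) * real (c y)"
proof -
  have "(\<Prod>s\<in>S. real (c s choose dd x y s)) = (\<Prod>s\<in>S. (if s = x then real (c x) else 1) * (if s = y then real (c y) else 1))"
    using assms(4) by (intro prod.cong) (auto simp: dd_def del_def)
  then show ?thesis using assms by (simp add: prod.distrib prod.delta)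
qed

lemma prod_choose_dd_eq:
  assumes "finite S" "x \<in> S"
  shows "(\<Prod>s\<in>S. real (c s choose dd x x s)) = real (c x choose 2)"
proof -
  have "(\<Prod>s\<in>S. real (c s choose dd x x s)) = (\<Prod>s\<in>S. if s = x then real (c x choose 2) else 1)"
    by (intro prod.cong) (auto simp: dd_def del_def numeral_2_eq_2)
  then show ?thesis using assms by (simp add: prod.delta)
qed

locale prot =
  fixes Sig :: "nat set" and a :: "nat \<Rightarrow> int" and b :: int and m :: int
  assumes finSig: "finite Sig" and mpos: "m > 0"
begin

definition "M = Suc (Max (insert 0 Sig))"
definition "mm = nat m"
definition "FF = M"
definition "WW = Suc M"
definition LL :: "nat \<Rightarrow> nat" where "LL j = Suc (Suc (M + j))"
definition "S = Sig \<union> {FF, WW} \<union> LL ` {..<mm}"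
definition resid :: "nat \<Rightarrow> nat" where "resid s = nat (a s mod m)"
definition "inR = (\<lambda>s. (del s, del (LL (resid s)))) ` Sig"
definition "fR = {(del FF, del (LL 0))}"
definition "mR = (\<lambda>(i, j). (dd (LL i) (LL j), dd (LL ((i + j) mod mm)) WW)) ` ({..<mm} \<times> {..<mm})"
definition "NV0 = inR \<union> fR \<union> mR"
definition "VD = {(r, r) | r. supp_in S r \<and> 1 \<le> csize S r \<and> csize S r \<le> 2 \<and> r \<notin> fst ` NV0}"
definition "RR = NV0 \<union> VD"
definition "Y1 = {LL j | j. j < mm \<and> int j mod m = b mod m}"
definition "Y0 = {LL j | j. j < mm \<and> int j mod m \<noteq> b mod m}"
definition wt :: "nat \<Rightarrow> int" where
  "wt s = (if s \<in> Sig then a s else if Suc (Suc M) \<le> s then int (s - Suc (Suc M)) else 0)"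
definition pw :: "nat \<Rightarrow> int" where
  "pw s = (if s \<in> Sig \<or> s = FF then 2 else if Suc (Suc M) \<le> s then 1 else 0)"
definition cw :: "nat \<Rightarrow> int" where
  "cw s = (if s = WW then 0 else 1)"

lemma Sig_lt: "s \<in> Sig \<Longrightarrow> s < M"
  unfolding M_def using finSig by (simp add: le_imp_less_Suc)

lemma mm_pos: "0 < mm" unfolding mm_def using mpos by simp

lemma resid_lt: "resid s < mm"
  unfolding resid_def mm_def using mpos pos_mod_bound[of m "a s"] by (simp add: nat_less_eq_zless)

lemma finS: "finite S" unfolding S_def using finSig by auto

lemma distinct_sp [simp]:
  "FF \<noteq> WW" "WW \<noteq> FF" "LL j \<noteq> FF" "FF \<noteq> LL j" "LL j \<noteq> WW" "WW \<noteq> LL j"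
  "LL i = LL j \<longleftrightarrow> i = j"
  "FF \<notin> Sig" "WW \<notin> Sig" "LL j \<notin> Sig"
  using Sig_lt unfolding FF_def WW_def LL_def by fastforce+

lemma in_S [simp]: "FF \<in> S" "WW \<in> S" "j < mm \<Longrightarrow> LL j \<in> S" "s \<in> Sig \<Longrightarrow> s \<in> S"
  unfolding S_def by auto

lemma wt_simps [simp]: "wt FF = 0" "wt WW = 0" "wt (LL j) = int j" "s \<in> Sig \<Longrightarrow> wt s = a s"
  unfolding wt_def FF_def WW_def LL_def using distinct_sp by (auto simp: FF_def WW_def LL_def)

lemma pw_simps [simp]: "pw FF = 2" "pw WW = 0" "pw (LL j) = 1" "s \<in> Sig \<Longrightarrow> pw s = 2"
  unfolding pw_def FF_def WW_def LL_def using distinct_sp by (auto simp: FF_def WW_def LL_def)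

lemma cw_simps [simp]: "cw FF = 1" "cw WW = 0" "cw (LL j) = 1" "s \<in> Sig \<Longrightarrow> cw s = 1"
  unfolding cw_def using distinct_sp by auto

lemma sum_S: "sum f S = sum f Sig + f FF + f WW + (\<Sum>j<mm. f (LL j))"
proof -
  have d1: "Sig \<inter> ({FF, WW} \<union> LL ` {..<mm}) = {}" by auto
  have d2: "{FF, WW} \<inter> LL ` {..<mm} = {}" by auto
  have "sum f S = sum f Sig + sum f ({FF, WW} \<union> LL ` {..<mm})"
    unfolding S_def using finSig d1 by (subst Un_assoc, intro sum.union_disjoint) auto
  also have "sum f ({FF, WW} \<union> LL ` {..<mm}) = f FF + f WW + sum f (LL ` {..<mm})"
    using d2 by (subst sum.union_disjoint) auto
  also have "sum f (LL ` {..<mm}) = (\<Sum>j<mm. f (LL j))"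
    by (subst sum.reindex) (auto simp: inj_on_def)
  finally show ?thesis by (simp add: add.assoc)
qed

end



context prot begin

lemma LL_S: "j < mm \<Longrightarrow> LL j \<in> S" by simp

lemma NV0_props:
  assumes "\<alpha> \<in> NV0"
  shows "supp_in S (fst \<alpha>) \<and> supp_in S (snd \<alpha>) \<and> csize S (fst \<alpha>) \<in> {1, 2} \<and>
    csize S (fst \<alpha>) = csize S (snd \<alpha>) \<and> fst \<alpha> \<noteq> snd \<alpha> \<and>
    Qs S pw (snd \<alpha>) = Qs S pw (fst \<alpha>) - 1 \<and>
    Qs S wt (snd \<alpha>) mod m = Qs S wt (fst \<alpha>) mod m \<and> Qs S cw (snd \<alpha>) \<ge> 1"
proof -
  have fS: "finite S" by (rule finS)
  have L0: "LL 0 \<in> S" using mm_pos by simp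
  consider (i) s where "s \<in> Sig" "\<alpha> = (del s, del (LL (resid s)))"
    | (f) "\<alpha> = (del FF, del (LL 0))"
    | (mg) i j where "i < mm" "j < mm" "\<alpha> = (dd (LL i) (LL j), dd (LL ((i + j) mod mm)) WW)"
    using assms unfolding NV0_def inR_def fR_def mR_def by auto
  then show ?thesis
  proof cases
    case i
    have Ls: "LL (resid s) \<in> S" using resid_lt by simp
    have ne: "del s \<noteq> del (LL (resid s))"
    proof
      assume "del s = del (LL (resid s))"
      then have "del s s = del (LL (resid s)) s" by simp
      then show False using i(1) distinct_sp(10)[of "resid s"] unfolding del_def by (auto split: if_splits) (metis distinct_sp(10))
    qed
    have "int (resid s) = a s mod m" unfolding resid_def using mpos by simp
    then show ?thesis using i Ls fS ne
      by (simp add: supp_del csize_del Qs_del)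
  next
    case f
    have ne: "del FF \<noteq> del (LL 0)"
    proof
      assume "del FF = del (LL 0)"
      then have "del FF FF = del (LL 0) FF" by simp
      then show False unfolding del_def by simp
    qed
    then show ?thesis using f L0 fS by (simp add: supp_del csize_del Qs_del)
  next
    case mg
    have k: "(i + j) mod mm < mm" using mm_pos by simp
    have ne: "dd (LL i) (LL j) \<noteq> dd (LL ((i + j) mod mm)) WW"
    proof
      assume "dd (LL i) (LL j) = dd (LL ((i + j) mod mm)) WW"
      then have "dd (LL i) (LL j) WW = dd (LL ((i + j) mod mm)) WW WW" by simp
      then show False unfolding dd_def del_def by simp
    qed
    have md: "int ((i + j) mod mm) = (int i + int j) mod m"
      unfolding mm_def using mpos by (simp add: zmod_int)
    show ?thesis using mg k ne fS
      by (simp add: supp_dd csize_dd Qs_dd md mod_add_eq)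
  qed
qed

lemma NV0_not_void: "\<alpha> \<in> NV0 \<Longrightarrow> fst \<alpha> \<noteq> snd \<alpha>" using NV0_props by blast

lemma NV_RR: "NV RR = NV0"
  unfolding NV_def RR_def VD_def using NV0_not_void by auto

lemma RR_cases: "\<alpha> \<in> RR \<Longrightarrow> \<alpha> \<notin> NV0 \<Longrightarrow> fst \<alpha> = snd \<alpha>"
  unfolding RR_def VD_def by auto

lemma RR_supp: assumes "\<alpha> \<in> RR" shows "supp_in S (fst \<alpha>) \<and> supp_in S (snd \<alpha>)"
proof (cases "\<alpha> \<in> NV0")
  case True then show ?thesis using NV0_props[OF True] by blast
next
  case False then show ?thesis using assms unfolding RR_def VD_def by auto
qed

lemma finNV0: "finite NV0"
  unfolding NV0_def inR_def fR_def mR_def using finSig by auto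

lemma finRR: "finite RR"
proof -
  let ?B = "{r. \<forall>x. (x \<in> S \<longrightarrow> r x \<in> {..2::nat}) \<and> (x \<notin> S \<longrightarrow> r x = 0)}"
  have fB: "finite ?B" by (rule finite_set_of_finite_funs) (auto simp: finS)
  have "VD \<subseteq> (\<lambda>r. (r, r)) ` ?B"
  proof
    fix \<alpha> assume "\<alpha> \<in> VD"
    then obtain r where r: "\<alpha> = (r, r)" "supp_in S r" "csize S r \<le> 2" unfolding VD_def by auto
    have "r x \<le> 2" if "x \<in> S" for x
    proof -
      have "r x \<le> csize S r" unfolding csize_def using that finS by (intro member_le_sum) auto
      then show ?thesis using r by simp
    qed
    then have "r \<in> ?B" using r unfolding supp_in_def by auto
    then show "\<alpha> \<in> (\<lambda>r. (r, r)) ` ?B" using r by auto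
  qed
  then have "finite VD" using fB finite_surj by blast
  then show ?thesis unfolding RR_def using finNV0 by auto
qed

lemma csize_apply: "\<alpha> \<in> RR \<Longrightarrow> applicable \<alpha> c \<Longrightarrow> csize S (apply_r \<alpha> c) = csize S c"
proof -
  assume a: "\<alpha> \<in> RR" "applicable \<alpha> c"
  show ?thesis
  proof (cases "\<alpha> \<in> NV0")
    case True
    then have "csize S (fst \<alpha>) = csize S (snd \<alpha>)" using NV0_props by blast
    then have "Qs S (\<lambda>_. 1) (fst \<alpha>) = Qs S (\<lambda>_. 1) (snd \<alpha>)" using csize_Qs by metis
    then show ?thesis using Qs_apply[OF a(2), of S "\<lambda>_. 1"] csize_Qs
      by (metis add.commute diff_add_cancel of_nat_eq_iff)
  next
    case False
    then have "fst \<alpha> = snd \<alpha>" using RR_cases a by blast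
    then show ?thesis using apply_void[of "fst \<alpha>" c] a(2) by (cases \<alpha>) auto
  qed
qed

lemma reach_csize: "reach RR c c' \<Longrightarrow> csize S c' = csize S c"
  unfolding reach_def
proof (induction rule: rtranclp_induct)
  case (step y z)
  then show ?case using csize_apply unfolding step_def by auto
qed simp

lemma crn_RR: "crn S RR"
  unfolding crn_def
proof (intro conjI)
  show "finite S" by (rule finS)
  show "finite RR" by (rule finRR)
  show "\<forall>(r, p)\<in>RR. supp_in S r \<and> supp_in S p \<and> csize S r \<in> {1, 2} \<and> csize S r \<le> csize S p"
  proof (clarify)
    fix r p assume rp: "(r, p) \<in> RR"
    show "supp_in S r \<and> supp_in S p \<and> csize S r \<in> {1, 2} \<and> csize S r \<le> csize S p"
    proof (cases "(r, p) \<in> NV0")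
      case True then show ?thesis using NV0_props[OF True] by auto
    next
      case False
      then have "(r, p) \<in> VD" using rp unfolding RR_def by auto
      then show ?thesis unfolding VD_def by auto
    qed
  qed
  show "\<forall>r. supp_in S r \<and> 1 \<le> csize S r \<and> csize S r \<le> 2 \<longrightarrow> Rof RR r \<noteq> {}"
  proof clarify
    fix r assume r: "supp_in S r" "1 \<le> csize S r" "csize S r \<le> 2" "Rof RR r = {}"
    show False
    proof (cases "r \<in> fst ` NV0")
      case True
      then obtain \<alpha> where "\<alpha> \<in> NV0" "fst \<alpha> = r" by auto
      then have "\<alpha> \<in> Rof RR r" unfolding Rof_def RR_def by auto
      then show False using r by auto
    next
      case False
      then have "(r, r) \<in> Rof RR r" using r unfolding Rof_def RR_def VD_def by auto
      then show False using r by auto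
    qed
  qed
  show "\<forall>(r, p)\<in>RR. r = p \<longrightarrow> Rof RR r = {(r, p)}"
  proof clarify
    fix r assume rr: "(r, r) \<in> RR"
    then have "(r, r) \<notin> NV0" using NV0_not_void by fastforce
    then have "(r, r) \<in> VD" using rr unfolding RR_def by auto
    then have nr: "r \<notin> fst ` NV0" unfolding VD_def by auto
    show "Rof RR r = {(r, r)}"
    proof
      show "Rof RR r \<subseteq> {(r, r)}"
      proof
        fix \<alpha> assume "\<alpha> \<in> Rof RR r"
        then have "\<alpha> \<in> RR" "fst \<alpha> = r" unfolding Rof_def by auto
        moreover have "\<alpha> \<notin> NV0" using nr \<open>fst \<alpha> = r\<close> by auto
        ultimately show "\<alpha> \<in> {(r, r)}" using RR_cases[of \<alpha>] by (cases \<alpha>) auto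
      qed
      show "{(r, r)} \<subseteq> Rof RR r" using rr unfolding Rof_def by auto
    qed
  qed
  show "finite_density S RR"
    unfolding finite_density_def using reach_csize by (intro exI[of _ 1]) auto
qed

lemma crd_RR: "crd S RR Sig Y0 Y1 FF"
  unfolding crd_def using crn_RR by (auto simp: S_def Y0_def Y1_def)

end



context prot begin

definition quiet :: "conf \<Rightarrow> bool" where "quiet c \<longleftrightarrow> (\<forall>\<alpha>\<in>NV0. \<not> applicable \<alpha> c)"

lemma inR_mem: "s \<in> Sig \<Longrightarrow> (del s, del (LL (resid s))) \<in> NV0"
  unfolding NV0_def inR_def by auto
lemma fR_mem: "(del FF, del (LL 0)) \<in> NV0"
  unfolding NV0_def fR_def by auto
lemma mR_mem: "i < mm \<Longrightarrow> j < mm \<Longrightarrow> (dd (LL i) (LL j), dd (LL ((i + j) mod mm)) WW) \<in> NV0"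
  unfolding NV0_def mR_def by auto

lemma app_del: "c x \<ge> 1 \<Longrightarrow> applicable (del x, p) c"
  unfolding applicable_def del_def by auto

lemma L_pos_ex: "(\<Sum>j<mm. (c::conf) (LL j)) > 0 \<Longrightarrow> \<exists>i<mm. c (LL i) > 0"
proof (rule ccontr)
  assume "\<not> (\<exists>i<mm. c (LL i) > 0)" "(\<Sum>j<mm. c (LL j)) > 0"
  then have "\<forall>i\<in>{..<mm}. c (LL i) = 0" by auto
  then have "(\<Sum>j<mm. c (LL j)) = 0" by simp
  then show False using \<open>(\<Sum>j<mm. c (LL j)) > 0\<close> by simp
qed

lemma L_other:
  fixes c :: conf
  assumes "i < mm" "c (LL i) = 1" "(\<Sum>j<mm. c (LL j)) \<ge> 2"
  shows "\<exists>j<mm. j \<noteq> i \<and> c (LL j) \<ge> 1"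
proof -
  have "(\<Sum>j<mm. c (LL j)) = c (LL i) + (\<Sum>j\<in>{..<mm} - {i}. c (LL j))"
    using assms(1) by (subst sum.remove[of _ i]) auto
  then have "(\<Sum>j\<in>{..<mm} - {i}. c (LL j)) > 0" using assms by simp
  show ?thesis
  proof (rule ccontr)
    assume "\<not> ?thesis"
    then have "\<forall>j\<in>{..<mm} - {i}. c (LL j) = 0" by auto
    then have "(\<Sum>j\<in>{..<mm} - {i}. c (LL j)) = 0" by simp
    then show False using \<open>(\<Sum>j\<in>{..<mm} - {i}. c (LL j)) > 0\<close> by simp
  qed
qed

lemma two_L:
  fixes c :: conf
  assumes "(\<Sum>j<mm. c (LL j)) \<ge> 2"
  shows "\<exists>i<mm. \<exists>j<mm. \<forall>s. dd (LL i) (LL j) s \<le> c s"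
proof -
  have "(\<Sum>j<mm. c (LL j)) > 0" using assms by simp
  then obtain i where i: "i < mm" "c (LL i) > 0" using L_pos_ex by blast
  show ?thesis
  proof (cases "c (LL i) \<ge> 2")
    case True
    have "dd (LL i) (LL i) s \<le> c s" for s using True unfolding dd_def del_def by (cases "s = LL i") simp_all
    then show ?thesis using i by blast
  next
    case False
    then have "c (LL i) = 1" using i by auto
    then obtain j where j: "j < mm" "j \<noteq> i" "c (LL j) \<ge> 1" using L_other i assms by blast
    have "dd (LL i) (LL j) s \<le> c s" for s using j \<open>c (LL i) = 1\<close> unfolding dd_def del_def
      by (cases "s = LL i"; cases "s = LL j") simp_all
    then show ?thesis using i j by blast
  qed
qed

lemma quiet_char:
  assumes "quiet c"
  shows "(\<forall>s\<in>Sig. c s = 0) \<and> c FF = 0 \<and> (\<Sum>j<mm. c (LL j)) \<le> 1"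
proof (intro conjI ballI)
  fix s assume s: "s \<in> Sig"
  show "c s = 0"
  proof (rule ccontr)
    assume "c s \<noteq> 0"
    then have "applicable (del s, del (LL (resid s))) c" by (intro app_del) simp
    then show False using assms inR_mem[OF s] unfolding quiet_def by blast
  qed
next
  show "c FF = 0"
  proof (rule ccontr)
    assume "c FF \<noteq> 0"
    then have "applicable (del FF, del (LL 0)) c" by (intro app_del) simp
    then show False using assms fR_mem unfolding quiet_def by blast
  qed
next
  show "(\<Sum>j<mm. c (LL j)) \<le> 1"
  proof (rule ccontr)
    assume "\<not> ?thesis"
    then have "2 \<le> (\<Sum>j<mm. c (LL j))" by simp
    then obtain i j where "i < mm" "j < mm" "\<forall>s. dd (LL i) (LL j) s \<le> c s"
      using two_L[of c] by blast
    then have "i < mm" "j < mm" "applicable (dd (LL i) (LL j), dd (LL ((i + j) mod mm)) WW) c"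
      unfolding applicable_def by auto
    then show False using assms mR_mem unfolding quiet_def by blast
  qed
qed

lemma le_sum_two:
  fixes c :: conf
  assumes "i < mm" "j < mm" "i \<noteq> j"
  shows "c (LL i) + c (LL j) \<le> (\<Sum>k<mm. c (LL k))"
proof -
  have "(\<Sum>k\<in>{i, j}. c (LL k)) \<le> (\<Sum>k<mm. c (LL k))" using assms by (intro sum_mono2) auto
  then show ?thesis using assms by simp
qed

lemma le_sum_one: "i < mm \<Longrightarrow> (c::conf) (LL i) \<le> (\<Sum>k<mm. c (LL k))"
  by (intro member_le_sum) auto

lemma not_quiet_L:
  assumes "\<not> quiet c" "\<forall>s\<in>Sig. c s = 0" "c FF = 0"
  shows "(\<Sum>j<mm. c (LL j)) \<ge> 2"
proof (rule ccontr)
  assume l: "\<not> ?thesis"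
  obtain \<alpha> where \<alpha>: "\<alpha> \<in> NV0" "applicable \<alpha> c" using assms(1) unfolding quiet_def by auto
  consider (i) s where "s \<in> Sig" "\<alpha> = (del s, del (LL (resid s)))"
    | (f) "\<alpha> = (del FF, del (LL 0))"
    | (mg) i j where "i < mm" "j < mm" "\<alpha> = (dd (LL i) (LL j), dd (LL ((i + j) mod mm)) WW)"
    using \<alpha>(1) unfolding NV0_def inR_def fR_def mR_def by auto
  then show False
  proof cases
    case i
    have "del s s \<le> c s" using \<alpha>(2) i unfolding applicable_def by auto
    then show False using assms(2) i(1) unfolding del_def by simp
  next
    case f
    have "del FF FF \<le> c FF" using \<alpha>(2) f unfolding applicable_def by auto
    then show False using assms(3) unfolding del_def by simp
  next
    case mg
    have app: "dd (LL i) (LL j) s \<le> c s" for s using \<alpha>(2) mg unfolding applicable_def by auto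
    show False
    proof (cases "i = j")
      case True
      then have "2 \<le> c (LL i)" using app[of "LL i"] unfolding dd_def del_def by simp
      then show False using l le_sum_one[OF mg(1), of c] by simp
    next
      case False
      then have "1 \<le> c (LL i)" "1 \<le> c (LL j)" using app[of "LL i"] app[of "LL j"] unfolding dd_def del_def by auto
      then show False using l le_sum_two[OF mg(1,2) False, of c] by simp
    qed
  qed
qed

lemma quiet_step: "quiet c \<Longrightarrow> step RR c c' \<Longrightarrow> c' = c"
  unfolding step_def quiet_def
proof -
  assume q: "\<forall>\<alpha>\<in>NV0. \<not> applicable \<alpha> c" and "\<exists>\<alpha>\<in>RR. applicable \<alpha> c \<and> c' = apply_r \<alpha> c"
  then obtain \<alpha> where a: "\<alpha> \<in> RR" "applicable \<alpha> c" "c' = apply_r \<alpha> c" by auto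
  then have "\<alpha> \<notin> NV0" using q by auto
  then have "fst \<alpha> = snd \<alpha>" using RR_cases a by blast
  then show "c' = c" using apply_void[of "fst \<alpha>" c] a by (cases \<alpha>) auto
qed

lemma quiet_halt: "quiet c \<Longrightarrow> c \<in> Z \<Longrightarrow> c \<in> halt RR Z"
proof -
  assume q: "quiet c" and z: "c \<in> Z"
  have "c' = c" if "reach RR c c'" for c'
    using that unfolding reach_def
  proof (induction rule: rtranclp_induct)
    case (step y z)
    then show ?case using quiet_step q by blast
  qed simp
  then show ?thesis using z unfolding halt_def by auto
qed

lemma Qs_split: "Qs S w c = (\<Sum>s\<in>Sig. w s * int (c s)) + w FF * int (c FF) + w WW * int (c WW)
   + (\<Sum>j<mm. w (LL j) * int (c (LL j)))"
  unfolding Qs_def by (rule sum_S)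

lemma Y1_eq: "Y1 = LL ` {k. k < mm \<and> int k mod m = b mod m}" unfolding Y1_def by auto
lemma Y0_eq: "Y0 = LL ` {k. k < mm \<and> int k mod m \<noteq> b mod m}" unfolding Y0_def by auto

lemma sum_LL_img:
  fixes c :: conf
  assumes "K \<subseteq> {..<mm}" "\<forall>k<mm. c (LL k) = (if k = j then 1 else 0)"
  shows "(\<Sum>s\<in>LL ` K. c s) = (if j \<in> K then 1 else 0)"
proof -
  have fK: "finite K" using assms(1) finite_subset by blast
  have "(\<Sum>s\<in>LL ` K. c s) = (\<Sum>k\<in>K. c (LL k))" by (subst sum.reindex) (auto simp: inj_on_def)
  also have "\<dots> = (\<Sum>k\<in>K. if k = j then 1 else 0)" using assms by (intro sum.cong) auto
  finally show ?thesis using fK by simp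
qed

lemma quiet_D:
  assumes q: "quiet c" and cw1: "Qs S cw c \<ge> 1" and wtm: "Qs S wt c mod m = X mod m"
  shows "c \<in> D Y0 Y1 (X mod m = b mod m)"
proof -
  have z: "\<forall>s\<in>Sig. c s = 0" "c FF = 0" "(\<Sum>j<mm. c (LL j)) \<le> 1" using quiet_char[OF q] by auto
  have e: "Qs S cw c = (\<Sum>j<mm. int (c (LL j)))" unfolding Qs_split using z by simp
  have "int (\<Sum>j<mm. c (LL j)) = (\<Sum>j<mm. int (c (LL j)))" by simp
  then have l1: "(\<Sum>j<mm. c (LL j)) = 1" using e cw1 z(3) by linarith
  then obtain j where j: "j < mm" "c (LL j) > 0" using L_pos_ex[of c] by auto
  have oth: "c (LL k) = 0" if "k < mm" "k \<noteq> j" for k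
    using le_sum_two[OF j(1) that(1) that(2)[symmetric], of c] l1 j(2) by simp
  have cj: "c (LL j) = 1" using le_sum_one[OF j(1), of c] l1 j(2) by simp
  have cL: "\<forall>k<mm. c (LL k) = (if k = j then 1 else 0)" using oth cj by auto
  have "(\<Sum>k<mm. int k * int (c (LL k))) = (\<Sum>k<mm. if k = j then int j else 0)"
    using cL by (intro sum.cong) auto
  also have "\<dots> = int j" using j by simp
  finally have "Qs S wt c = int j" unfolding Qs_split using z by simp
  then have jm: "int j mod m = X mod m" using wtm by simp
  have s1: "(\<Sum>s\<in>Y1. c s) = (if int j mod m = b mod m then 1 else 0)"
    unfolding Y1_eq using j(1) by (subst sum_LL_img[OF _ cL]) auto
  have s0: "(\<Sum>s\<in>Y0. c s) = (if int j mod m \<noteq> b mod m then 1 else 0)"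
    unfolding Y0_eq using j(1) by (subst sum_LL_img[OF _ cL]) auto
  show ?thesis unfolding D_def Let_def using s1 s0 jm by auto
qed

end



locale pexec = prot +
  fixes cs :: "nat \<Rightarrow> conf" and as :: "nat \<Rightarrow> reaction"
  assumes ex: "execution RR cs as" and wf: "weakly_fair RR cs as" and vi: "valid_init S Sig FF (cs 0)"
begin

lemma E0: "as t \<in> RR" "applicable (as t) (cs t)" "cs (Suc t) = apply_r (as t) (cs t)"
  using ex unfolding execution_def by auto

lemma E1: "as t \<notin> NV0 \<Longrightarrow> cs (Suc t) = cs t"
  using E0[of t] RR_cases[of "as t"] apply_void[of "fst (as t)" "cs t"] by (cases "as t") auto

lemma E2: "as t \<in> NV0 \<Longrightarrow> Qs S pw (cs (Suc t)) = Qs S pw (cs t) - 1"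
  using E0[of t] NV0_props[of "as t"] Qs_apply[of "as t" "cs t" S pw] by auto

lemma Qs_step: "Qs S w (cs (Suc t)) = Qs S w (cs t) - Qs S w (fst (as t)) + Qs S w (snd (as t))"
  using E0[of t] Qs_apply by simp

lemma inv_wt: "Qs S wt (cs t) mod m = Qs S wt (cs 0) mod m"
proof (induction t)
  case (Suc t)
  show ?case
  proof (cases "as t \<in> NV0")
    case True
    have "Qs S wt (cs (Suc t)) mod m = (Qs S wt (cs t) - Qs S wt (fst (as t)) + Qs S wt (snd (as t))) mod m"
      by (simp add: Qs_step)
    also have "\<dots> = (Qs S wt (cs t) - Qs S wt (fst (as t)) + Qs S wt (snd (as t)) mod m) mod m"
      by (simp add: mod_add_right_eq)
    also have "\<dots> = (Qs S wt (cs t) - Qs S wt (fst (as t)) + Qs S wt (fst (as t)) mod m) mod m"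
      using NV0_props[OF True] by simp
    also have "\<dots> = Qs S wt (cs t) mod m"
      by (simp add: mod_add_right_eq)
    finally show ?thesis using Suc by simp
  next
    case False then show ?thesis using E1 Suc by simp
  qed
qed simp

lemma Qs_nonneg: "(\<forall>s. w s \<ge> 0) \<Longrightarrow> Qs S w c \<ge> 0"
  unfolding Qs_def by (intro sum_nonneg) auto

lemma pw_nonneg: "pw s \<ge> 0" unfolding pw_def by auto
lemma cw_nonneg: "cw s \<ge> 0" unfolding cw_def by auto

lemma inv_cw: "Qs S cw (cs t) \<ge> 1"
proof (induction t)
  case 0
  have "cs 0 FF \<ge> 1" using vi unfolding valid_init_def by auto
  moreover have "(\<Sum>s\<in>Sig. cw s * int (cs 0 s)) \<ge> 0" "(\<Sum>j<mm. cw (LL j) * int (cs 0 (LL j))) \<ge> 0"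
    by (intro sum_nonneg; simp add: cw_def)+
  ultimately show ?case unfolding Qs_split by simp
next
  case (Suc t)
  show ?case
  proof (cases "as t \<in> NV0")
    case True
    have "Qs S cw (fst (as t)) \<le> Qs S cw (cs t)"
      using E0(2)[of t] cw_nonneg unfolding applicable_def by (intro Qs_mono) auto
    then show ?thesis using Qs_step[of cw t] NV0_props[OF True] by simp
  next
    case False then show ?thesis using E1 Suc by simp
  qed
qed

lemma inv_csize: "csize S (cs t) = csize S (cs 0)"
  by (induction t) (auto simp: E0 csize_apply)

lemma E3: "(\<forall>u. t \<le> u \<longrightarrow> u < s \<longrightarrow> as u \<notin> NV0) \<Longrightarrow> t \<le> s \<Longrightarrow> cs s = cs t"
proof (induction s)
  case (Suc s)
  show ?case
  proof (cases "t \<le> s")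
    case True then show ?thesis using Suc E1[of s] by auto
  next
    case False then have "t = Suc s" using Suc by simp
    then show ?thesis by simp
  qed
qed simp

lemma E4: "t \<le> s \<Longrightarrow> Qs S pw (cs s) \<le> Qs S pw (cs t)"
proof (induction s)
  case (Suc s)
  show ?case
  proof (cases "t \<le> s")
    case True
    have "Qs S pw (cs (Suc s)) \<le> Qs S pw (cs s)"
      using E1[of s] E2[of s] by (cases "as s \<in> NV0") auto
    then show ?thesis using Suc True by simp
  next
    case False then have "t = Suc s" using Suc by simp
    then show ?thesis by simp
  qed
qed simp

lemma E5: "t \<le> u \<Longrightarrow> u < s \<Longrightarrow> as u \<in> NV0 \<Longrightarrow> Qs S pw (cs s) < Qs S pw (cs t)"
  using E4[of t u] E4[of "Suc u" s] E2[of u] by simp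

lemma E8: "\<not> quiet (cs t) \<Longrightarrow> \<exists>s\<ge>t. as s \<in> NV0"
proof -
  assume "\<not> quiet (cs t)"
  then obtain \<alpha> where \<alpha>: "\<alpha> \<in> NV0" "applicable \<alpha> (cs t)" unfolding quiet_def by auto
  then have "\<alpha> \<in> RR" unfolding RR_def by auto
  then obtain s where s: "s \<ge> t" "as s = \<alpha> \<or> \<not> applicable \<alpha> (cs s)"
    using wf \<alpha> unfolding weakly_fair_def by blast
  show ?thesis
  proof (cases "as s = \<alpha>")
    case True then show ?thesis using s \<alpha> by auto
  next
    case False
    then have "cs s \<noteq> cs t" using s \<alpha> by auto
    then show ?thesis using E3[of t s] s by auto
  qed
qed

lemma E9: "\<exists>t. quiet (cs t)"
proof (rule ccontr)
  assume nq: "\<not> ?thesis"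
  have "\<exists>t. Qs S pw (cs t) + int k \<le> Qs S pw (cs 0)" for k
  proof (induction k)
    case 0 then show ?case by auto
  next
    case (Suc k)
    then obtain t where t: "Qs S pw (cs t) + int k \<le> Qs S pw (cs 0)" by auto
    obtain s where "s \<ge> t" "as s \<in> NV0" using E8 nq by blast
    then have "Qs S pw (cs (Suc s)) < Qs S pw (cs t)" using E5[of t s "Suc s"] by simp
    then show ?case using t by (intro exI[of _ "Suc s"]) simp
  qed
  then obtain t where "Qs S pw (cs t) + int (nat (Qs S pw (cs 0)) + 1) \<le> Qs S pw (cs 0)" by blast
  moreover have "Qs S pw (cs t) \<ge> 0" "Qs S pw (cs 0) \<ge> 0" using Qs_nonneg pw_nonneg by auto
  ultimately show False by simp
qed

definition "X0 = (\<Sum>s\<in>Sig. a s * int (restrict_to Sig (cs 0) s))"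

lemma wt0: "Qs S wt (cs 0) = X0"
proof -
  have z: "cs 0 (LL j) = 0" for j using vi unfolding valid_init_def by simp
  have "(\<Sum>s\<in>Sig. wt s * int (cs 0 s)) = X0" unfolding X0_def restrict_to_def by (intro sum.cong) auto
  then show ?thesis unfolding Qs_split by (simp add: z)
qed

lemma E7: "quiet (cs t) \<Longrightarrow> cs t \<in> halt RR (D Y0 Y1 (X0 mod m = b mod m))"
  using quiet_halt quiet_D[of "cs t" X0] inv_cw[of t] inv_wt[of t] wt0 by simp

lemma halts: "halts_into RR (D Y0 Y1 (X0 mod m = b mod m)) cs"
  unfolding halts_into_def using E7 E9 by blast

end



lemma choose2: "2 * (n choose 2) = n * (n - 1)"
  by (metis Suc_1 binomial_absorption choose_one)

lemma real_choose2: "real (n choose 2) = real n * (real n - 1) / 2"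
proof -
  have h1: "2 * real (n choose 2) = real (n * (n - 1))" by (metis choose2 of_nat_mult of_nat_numeral)
  have h2: "real (n * (n - 1)) = real n * (real n - 1)" by (cases n) (auto simp: algebra_simps)
  from h1 h2 show ?thesis by linarith
qed

lemma inv_le: "(a::real) > 0 \<Longrightarrow> b > 0 \<Longrightarrow> 1 / a \<le> b \<Longrightarrow> 1 / b \<le> a"
  by (simp add: divide_le_eq mult.commute)

lemma div_helper: "(Dd::real) > 0 \<Longrightarrow> E > 0 \<Longrightarrow> x \<le> y * E \<Longrightarrow> x / (E * Dd) \<le> y / Dd"
proof -
  assume a: "Dd > 0" "E > 0" "x \<le> y * E"
  have "x / E \<le> y" using a by (simp add: pos_divide_le_eq)
  then have "x / E / Dd \<le> y / Dd" using a by (intro divide_right_mono) auto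
  then show ?thesis by (simp add: divide_divide_eq_left)
qed

context prot begin

definition "KR = real (card RR)"

lemma KR_pos: "KR \<ge> 1"
proof -
  have "RR \<noteq> {}" using fR_mem unfolding RR_def by auto
  then show ?thesis unfolding KR_def using finRR by (simp add: Suc_leI card_gt_0_iff)
qed

lemma card_Rof: "\<alpha> \<in> RR \<Longrightarrow> 1 \<le> real (card (Rof RR (fst \<alpha>))) \<and> real (card (Rof RR (fst \<alpha>))) \<le> KR"
proof -
  assume a: "\<alpha> \<in> RR"
  have fin: "finite (Rof RR (fst \<alpha>))" unfolding Rof_def using finRR by auto
  have "\<alpha> \<in> Rof RR (fst \<alpha>)" using a unfolding Rof_def by auto
  then have "card (Rof RR (fst \<alpha>)) > 0" using fin by (auto simp: card_gt_0_iff)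
  then have "card (Rof RR (fst \<alpha>)) \<ge> 1" by simp
  moreover have "card (Rof RR (fst \<alpha>)) \<le> card RR" unfolding Rof_def using finRR by (intro card_mono) auto
  ultimately show ?thesis unfolding KR_def by simp
qed

lemma prop_del:
  assumes "\<alpha> \<in> RR" "fst \<alpha> = del A" "A \<in> S" "c A \<ge> 1"
  shows "propensity V S RR c \<alpha> \<ge> 1 / KR"
proof -
  have p: "propensity V S RR c \<alpha> = real (c A) / real (card (Rof RR (fst \<alpha>)))"
    unfolding propensity_def using assms finS by (simp add: csize_del prod_choose_del)
  have c: "1 \<le> real (card (Rof RR (fst \<alpha>)))" "real (card (Rof RR (fst \<alpha>))) \<le> KR" using card_Rof[OF assms(1)] by auto
  have "1 / KR \<le> 1 / real (card (Rof RR (fst \<alpha>)))" using c by (intro divide_left_mono) auto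
  also have "\<dots> \<le> real (c A) / real (card (Rof RR (fst \<alpha>)))" using assms(4) c by (intro divide_right_mono) auto
  finally show ?thesis using p by simp
qed

lemma prop_dd:
  assumes "\<alpha> \<in> RR" "fst \<alpha> = dd x y" "x \<in> S" "y \<in> S" "V > 0"
  shows "propensity V S RR c \<alpha> \<ge> (\<Prod>s\<in>S. real (c s choose dd x y s)) / (V * KR)"
proof -
  have p: "propensity V S RR c \<alpha> = (\<Prod>s\<in>S. real (c s choose dd x y s)) / (V * real (card (Rof RR (fst \<alpha>))))"
    unfolding propensity_def using assms finS by (simp add: csize_dd)
  have c: "1 \<le> real (card (Rof RR (fst \<alpha>)))" "real (card (Rof RR (fst \<alpha>))) \<le> KR" using card_Rof[OF assms(1)] by auto
  have "0 \<le> (\<Prod>s\<in>S. real (c s choose dd x y s))" by (intro prod_nonneg) auto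
  then show ?thesis unfolding p using c assms(5)
    by (intro divide_left_mono mult_left_mono mult_pos_pos) auto
qed

lemma max_avg:
  fixes c :: conf
  shows "\<exists>k<mm. (\<Sum>j<mm. c (LL j)) \<le> mm * c (LL k)"
proof (rule ccontr)
  assume "\<not> ?thesis"
  then have "\<forall>k\<in>{..<mm}. mm * c (LL k) < (\<Sum>j<mm. c (LL j))" by auto
  then have "(\<Sum>k<mm. mm * c (LL k)) < (\<Sum>k<mm. (\<Sum>j<mm. c (LL j)))"
    using mm_pos by (intro sum_strict_mono) auto
  then show False by (simp add: sum_distrib_left)
qed

definition gN :: "real \<Rightarrow> nat \<Rightarrow> real" where
  "gN V p = KR + (if 2 \<le> p then 4 * real mm ^ 2 * V * KR / (real p * (real p - 1)) else 0)"

lemma gN_ge: "V > 0 \<Longrightarrow> KR \<le> gN V p"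
proof -
  assume V: "V > 0"
  have "real p * (real p - 1) > 0" if "2 \<le> p" using that by (simp add: mult_pos_pos)
  then show ?thesis unfolding gN_def using V KR_pos by auto
qed

lemma gN_nonneg: "V > 0 \<Longrightarrow> gN V p \<ge> 0"
  unfolding gN_def using KR_pos by auto

lemma Psum_ge: "V > 0 \<Longrightarrow> \<alpha> \<in> NV0 \<Longrightarrow> propensity V S RR c \<alpha> \<le> (\<Sum>\<beta>\<in>NV0. propensity V S RR c \<beta>)"
  using finNV0 prop_nonneg by (intro member_le_sum) auto

lemma NV0_RR: "\<alpha> \<in> NV0 \<Longrightarrow> \<alpha> \<in> RR" unfolding RR_def by auto

end


context prot begin

lemma TC_bound:
  assumes V: "V > 0" and cs1: "csize S c \<ge> 1"
  shows "TC V S RR (\<lambda>c. NV RR) c \<le> ennreal (gN V (nat (Qs S pw c)))"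
proof (cases "quiet c")
  case True
  have "TC V S RR (\<lambda>c. NV RR) c = ennreal (1 / totprop V S RR c)"
    using True unfolding quiet_def NV_RR by (intro TC_quiet) auto
  moreover have "1 / totprop V S RR c \<le> KR"
  proof -
    have "\<exists>A\<in>S. c A \<ge> 1"
    proof (rule ccontr)
      assume "\<not> (\<exists>A\<in>S. c A \<ge> 1)"
      then have "\<forall>A\<in>S. c A = 0" by auto
      then have "csize S c = 0" unfolding csize_def by simp
      then show False using cs1 by simp
    qed
    then obtain A where A: "A \<in> S" "c A \<ge> 1" by blast
    have "supp_in S (del A) \<and> 1 \<le> csize S (del A) \<and> csize S (del A) \<le> 2"
      using A finS by (simp add: supp_del csize_del)
    moreover have "\<forall>r. supp_in S r \<and> 1 \<le> csize S r \<and> csize S r \<le> 2 \<longrightarrow> Rof RR r \<noteq> {}"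
      using crn_RR unfolding crn_def by (elim conjE) assumption
    ultimately have "Rof RR (del A) \<noteq> {}" by blast
    then obtain \<alpha> where \<alpha>: "\<alpha> \<in> RR" "fst \<alpha> = del A" unfolding Rof_def by auto
    have "1 / KR \<le> propensity V S RR c \<alpha>" by (rule prop_del[of \<alpha> A c V, OF \<alpha> A])
    also have "\<dots> \<le> totprop V S RR c" unfolding totprop_def
      using finRR prop_nonneg[OF V] \<alpha> by (intro member_le_sum) auto
    finally have "1 / KR \<le> totprop V S RR c" .
    moreover have "1 / KR > 0" using KR_pos by simp
    moreover have Tp: "totprop V S RR c > 0" using \<open>1 / KR > 0\<close> \<open>1 / KR \<le> totprop V S RR c\<close>
      by linarith
    moreover have KRp: "KR > 0" using KR_pos by simp
    ultimately show ?thesis using inv_le[OF KRp Tp] by blast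
  qed
  moreover have "1 / totprop V S RR c \<le> gN V (nat (Qs S pw c))"
    using gN_ge[OF V, of "nat (Qs S pw c)"] \<open>1 / totprop V S RR c \<le> KR\<close> by linarith
  ultimately show ?thesis by (simp add: ennreal_leI)
next
  case nq: False
  let ?P = "\<Sum>\<beta>\<in>NV0. propensity V S RR c \<beta>"
  have Pbound: "?P \<ge> 1 / gN V (nat (Qs S pw c)) \<and> gN V (nat (Qs S pw c)) > 0"
  proof (cases "(\<exists>s\<in>Sig. c s \<ge> 1) \<or> c FF \<ge> 1")
    case True
    obtain \<alpha> A where \<alpha>: "\<alpha> \<in> NV0" "fst \<alpha> = del A" "A \<in> S" "c A \<ge> 1"
    proof -
      from True show thesis
      proof (elim disjE bexE)
        fix s assume "s \<in> Sig" "1 \<le> c s"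
        then show thesis using that[of "(del s, del (LL (resid s)))" s] inR_mem by simp
      next
        assume "1 \<le> c FF"
        then show thesis using that[of "(del FF, del (LL 0))" FF] fR_mem by simp
      qed
    qed
    have "1 / KR \<le> ?P" using prop_del[of \<alpha> A c V, OF NV0_RR[OF \<alpha>(1)] \<alpha>(2-4)] Psum_ge[OF V \<alpha>(1), of c] by linarith
    moreover have "KR \<le> gN V (nat (Qs S pw c))" unfolding gN_def using V KR_pos by auto
    moreover have "1 / gN V (nat (Qs S pw c)) \<le> 1 / KR"
      using KR_pos \<open>KR \<le> gN V (nat (Qs S pw c))\<close> by (intro divide_left_mono) auto
    ultimately show ?thesis using KR_pos by linarith
  next
    case False
    then have z: "\<forall>s\<in>Sig. c s = 0" "c FF = 0" by auto
    define l where "l = (\<Sum>j<mm. c (LL j))"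
    have l2: "l \<ge> 2" unfolding l_def using not_quiet_L[OF nq z] .
    have "Qs S pw c = int l" unfolding Qs_split l_def using z by simp
    then have nl: "nat (Qs S pw c) = l" by simp
    obtain k where k: "k < mm" "l \<le> mm * c (LL k)" using max_avg[of c] unfolding l_def by blast
    have ck1: "c (LL k) \<ge> 1" using k l2 by (cases "c (LL k)") auto
    have key: "?P \<ge> real l * (real l - 1) / (4 * real mm ^ 2 * V * KR)"
    proof (cases "c (LL k) \<ge> 2")
      case True
      let ?\<alpha> = "(dd (LL k) (LL k), dd (LL ((k + k) mod mm)) WW)"
      have a: "?\<alpha> \<in> NV0" using mR_mem k by simp
      have "propensity V S RR c ?\<alpha> \<ge> real (c (LL k) choose 2) / (V * KR)"
        using prop_dd[OF NV0_RR[OF a], of "LL k" "LL k" V c] k V finS by (simp add: prod_choose_dd_eq)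
      moreover have "real l * (real l - 1) / (4 * real mm ^ 2 * V * KR) \<le> real (c (LL k) choose 2) / (V * KR)"
      proof -
        define ck where "ck = real (c (LL k))"
        have hk: "real l \<le> real mm * ck" "ck \<ge> 2" "real l \<ge> 2" "real mm \<ge> 1"
          using k True l2 mm_pos unfolding ck_def by (simp_all add: of_nat_mult[symmetric] del: of_nat_mult)
        have "real l * (real l - 1) \<le> (real mm * ck) * (real mm * ck)"
          using hk by (intro mult_mono) auto
        also have "\<dots> \<le> 2 * real mm ^ 2 * (ck * (ck - 1))"
        proof -
          have a1: "ck * 2 \<le> ck * ck" using hk by (intro mult_left_mono) auto
          have a2: "ck * ck \<le> 2 * (ck * (ck - 1))" using a1 by (simp add: algebra_simps)
          have "(real mm * ck) * (real mm * ck) = real mm ^ 2 * (ck * ck)" by (simp add: power2_eq_square algebra_simps)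
          also have "\<dots> \<le> real mm ^ 2 * (2 * (ck * (ck - 1)))" using a2 by (intro mult_left_mono) auto
          finally show ?thesis by simp
        qed
        finally have i: "real l * (real l - 1) \<le> 2 * real mm ^ 2 * (ck * (ck - 1))" .
        have ch: "real (c (LL k) choose 2) = ck * (ck - 1) / 2" unfolding ck_def by (rule real_choose2)
        have "real l * (real l - 1) \<le> ck * (ck - 1) / 2 * (4 * real mm ^ 2)" using i by (simp add: algebra_simps)
        then have "real l * (real l - 1) \<le> real (c (LL k) choose 2) * (4 * real mm ^ 2)" by (simp only: ch)
        then have "real l * (real l - 1) / ((4 * real mm ^ 2) * (V * KR)) \<le> real (c (LL k) choose 2) / (V * KR)"
          using V KR_pos mm_pos by (intro div_helper) auto
        then show ?thesis by (simp add: mult.assoc)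
      qed
      ultimately show ?thesis using Psum_ge[OF V a, of c] by linarith
    next
      case False
      then have ck: "c (LL k) = 1" using ck1 by simp
      then obtain j where j: "j < mm" "j \<noteq> k" "c (LL j) \<ge> 1" using L_other[of k c, OF k(1) ck] l2 unfolding l_def by blast
      let ?\<alpha> = "(dd (LL k) (LL j), dd (LL ((k + j) mod mm)) WW)"
      have a: "?\<alpha> \<in> NV0" using mR_mem k j by simp
      have "propensity V S RR c ?\<alpha> \<ge> real (c (LL k)) * real (c (LL j)) / (V * KR)"
        using prop_dd[OF NV0_RR[OF a], of "LL k" "LL j" V c] k j V finS by (simp add: prod_choose_dd_ne)
      moreover have "real (c (LL k)) * real (c (LL j)) \<ge> 1" using ck j by simp
      moreover have "real l * (real l - 1) / (4 * real mm ^ 2 * V * KR) \<le> 1 / (V * KR)"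
      proof -
        have hl: "real l \<le> real mm" "real l \<ge> 2" using k ck l2 by simp_all
        have "real l * (real l - 1) \<le> real mm * real mm" using hl by (intro mult_mono) auto
        also have "\<dots> \<le> 4 * real mm ^ 2" by (simp add: power2_eq_square)
        finally show ?thesis using V KR_pos by (simp add: divide_simps)
      qed
      moreover have "1 / (V * KR) \<le> real (c (LL k)) * real (c (LL j)) / (V * KR)"
        using \<open>real (c (LL k)) * real (c (LL j)) \<ge> 1\<close> V KR_pos by (intro divide_right_mono) auto
      ultimately show ?thesis using Psum_ge[OF V a, of c] by linarith
    qed
    define G where "G = 4 * real mm ^ 2 * V * KR / (real l * (real l - 1))"
    have gpos: "G > 0" unfolding G_def using V KR_pos mm_pos l2 by simp
    have "gN V l = KR + G" unfolding gN_def G_def using l2 by simp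
    moreover have "1 / G = real l * (real l - 1) / (4 * real mm ^ 2 * V * KR)"
      unfolding G_def by simp
    moreover have "1 / (KR + G) \<le> 1 / G"
      using gpos KR_pos by (intro divide_left_mono mult_pos_pos) auto
    ultimately show ?thesis using key gpos KR_pos nl by (auto simp del: of_nat_diff)
  qed
  have "1 / gN V (nat (Qs S pw c)) > 0" using Pbound by simp
  then have Ppos: "?P > 0" using Pbound by linarith
  have "TC V S RR (\<lambda>c. NV RR) c \<le> ennreal (1 / (\<Sum>\<alpha>\<in>(\<lambda>c. NV RR) c. propensity V S RR c \<alpha>))"
    using V finS finRR RR_supp RR_cases Ppos unfolding NV_RR
    by (intro TC_le) (auto simp: RR_def)
  also have "\<dots> = ennreal (1 / ?P)" unfolding NV_RR by simp
  also have "\<dots> \<le> ennreal (gN V (nat (Qs S pw c)))"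
  proof (rule ennreal_leI)
    have "gN V (nat (Qs S pw c)) > 0" using Pbound by blast
    then show "1 / ?P \<le> gN V (nat (Qs S pw c))" using inv_le[OF _ Ppos] Pbound by blast
  qed
  finally show ?thesis .
qed

end



context prot begin

definition hh :: "nat \<Rightarrow> real" where "hh p = (if 2 \<le> p then 1 / (real p * (real p - 1)) else 0)"

lemma hh_sum: "(\<Sum>p\<le>N. hh p) = (if N = 0 then 0 else 1 - 1 / real N)"
proof (induction N)
  case 0 then show ?case by (simp add: hh_def)
next
  case (Suc N)
  show ?case
  proof (cases "N = 0")
    case True then show ?thesis by (simp add: hh_def)
  next
    case False
    then have "(\<Sum>p\<le>Suc N. hh p) = 1 - 1 / real N + 1 / (real (Suc N) * real N)"
      using Suc by (simp add: hh_def)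
    also have "\<dots> = 1 - 1 / real (Suc N)"
    proof -
      have pos: "real N > 0" using False by simp
      then have "real N * real N > 0" by simp
      then have nz: "real N + real N * real N \<noteq> 0" using pos by linarith
      show ?thesis using pos nz by (simp add: field_simps)
    qed
    finally show ?thesis by simp
  qed
qed

lemma hh_sum_le: "(\<Sum>p\<le>N. hh p) \<le> 1"
  unfolding hh_sum by simp

lemma gN_eq: "gN V p = KR + 4 * real mm ^ 2 * V * KR * hh p"
  unfolding gN_def hh_def by simp

lemma gsum:
  assumes V: "V > 0"
  shows "(\<Sum>p\<le>N. gN V p) \<le> real (N + 1) * KR + 4 * real mm ^ 2 * V * KR"
proof -
  have "(\<Sum>p\<le>N. gN V p) = real (N + 1) * KR + 4 * real mm ^ 2 * V * KR * (\<Sum>p\<le>N. hh p)"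
    unfolding gN_eq by (simp add: sum.distrib sum_distrib_left)
  also have "\<dots> \<le> real (N + 1) * KR + 4 * real mm ^ 2 * V * KR * 1"
    using V KR_pos hh_sum_le[of N] by (intro add_left_mono mult_left_mono) auto
  finally show ?thesis by simp
qed

lemma Qs_pw_le: "Qs S pw c \<le> 2 * int (csize S c)"
proof -
  have "Qs S pw c \<le> (\<Sum>s\<in>S. 2 * int (c s))" unfolding Qs_def
    by (intro sum_mono mult_right_mono) (auto simp: pw_def)
  then show ?thesis unfolding csize_def by (simp add: sum_distrib_left)
qed

end

context pexec begin

abbreviation "ZZ \<equiv> D Y0 Y1 (X0 mod m = b mod m)"

definition ff :: "nat \<Rightarrow> nat" where "ff t = tau NV0 cs as t"

lemma ff_stop: "stopcond NV0 cs as t (ff t)"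
proof -
  have "\<exists>s. stopcond NV0 cs as t s"
  proof (cases "quiet (cs t)")
    case True
    have "\<forall>\<alpha>\<in>NV0. \<exists>u. t \<le> u \<and> u \<le> Suc t \<and> \<not> applicable \<alpha> (cs u)"
    proof
      fix \<alpha> assume "\<alpha> \<in> NV0"
      then have "\<not> applicable \<alpha> (cs t)" using True unfolding quiet_def by blast
      then show "\<exists>u. t \<le> u \<and> u \<le> Suc t \<and> \<not> applicable \<alpha> (cs u)" by (intro exI[of _ t]) simp
    qed
    then have "stopcond NV0 cs as t (Suc t)" unfolding stopcond_def by simp
    then show ?thesis by blast
  next
    case False
    then obtain s where "s \<ge> t" "as s \<in> NV0" using E8 by blast
    then have "stopcond NV0 cs as t (Suc s)" unfolding stopcond_def by simp
    then show ?thesis by blast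
  qed
  then show ?thesis unfolding ff_def tau_def by (rule LeastI_ex)
qed

lemma ff_gt: "t < ff t" using ff_stop[of t] unfolding stopcond_def by blast

definition hstep :: nat where "hstep = (LEAST t. cs t \<in> halt RR ZZ)"

lemma hstep_ex: "\<exists>t. cs t \<in> halt RR ZZ" using halts unfolding halts_into_def .

lemma halting_step_eq: "halting_step RR ZZ cs = enat hstep"
  unfolding halting_step_def hstep_def using hstep_ex by simp

lemma hstep_le: "cs t \<in> halt RR ZZ \<Longrightarrow> hstep \<le> t"
  unfolding hstep_def by (rule Least_le)

lemma E12:
  assumes "ff t < hstep"
  shows "\<exists>u. t \<le> u \<and> u < ff t \<and> as u \<in> NV0"
proof (rule ccontr)
  assume no: "\<not> ?thesis"
  have st: "t < ff t" "as (ff t - 1) \<in> NV0 \<or> (\<forall>\<alpha>\<in>NV0. \<exists>u. t \<le> u \<and> u \<le> ff t \<and> \<not> applicable \<alpha> (cs u))"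
    using ff_stop[of t] unfolding stopcond_def by auto
  have const: "cs u = cs t" if "t \<le> u" "u \<le> ff t" for u
  proof (rule E3)
    show "\<forall>u'. t \<le> u' \<longrightarrow> u' < u \<longrightarrow> as u' \<notin> NV0" using no that(2) by auto
  qed (rule that(1))
  show False
  proof (cases "as (ff t - 1) \<in> NV0")
    case True
    have "t \<le> ff t - 1" "ff t - 1 < ff t" using st(1) by auto
    then show False using no True by blast
  next
    case False
    then have allu: "\<forall>\<alpha>\<in>NV0. \<exists>u. t \<le> u \<and> u \<le> ff t \<and> \<not> applicable \<alpha> (cs u)" using st by auto
    have na: "\<not> applicable \<alpha> (cs (ff t))" if "\<alpha> \<in> NV0" for \<alpha>
    proof -
      from allu that obtain u where u: "t \<le> u" "u \<le> ff t" "\<not> applicable \<alpha> (cs u)"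
        by (elim ballE exE conjE) auto
      have "cs u = cs t" by (rule const[OF u(1) u(2)])
      moreover have "cs (ff t) = cs t" by (rule const) (use st(1) in auto)
      ultimately show ?thesis using u by simp
    qed
    have "quiet (cs (ff t))" unfolding quiet_def using na by simp
    then have hh: "cs (ff t) \<in> halt RR ZZ" by (rule E7)
    show False using hstep_le[OF hh] assms by simp
  qed
qed

end



context pexec begin

lemma tr_suc: "rounds ff \<sigma> (Suc i) = ff (\<sigma> (rounds ff \<sigma> i))" by simp

lemma Qs_pw_nonneg: "Qs S pw c \<ge> 0" using Qs_nonneg pw_nonneg by blast

lemma csize_pos: "csize S (cs t) \<ge> 1"
  using inv_csize[of t] vi unfolding valid_init_def is_conf_def by simp

lemma RT_bound:
  assumes sig: "\<forall>t. \<sigma> t \<ge> t" and V: "V > 0"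
  shows "RT_exec V S RR (\<lambda>c. NV RR) \<sigma> ZZ cs as
    \<le> ennreal (real (2 * csize S (cs 0) + 1) * KR + 4 * real mm ^ 2 * V * KR)"
proof -
  define tr where "tr = rounds ff \<sigma>"
  define ph where "ph i = Qs S pw (cs (\<sigma> (tr i)))" for i
  have trS: "tr (Suc i) = ff (\<sigma> (tr i))" for i unfolding tr_def by simp
  have trinc: "tr i < tr (Suc i)" for i
  proof -
    have "tr i \<le> \<sigma> (tr i)" using sig by blast
    also have "\<sigma> (tr i) < ff (\<sigma> (tr i))" by (rule ff_gt)
    finally show ?thesis unfolding trS .
  qed
  have trge: "i \<le> tr i" for i
  proof (induction i)
    case (Suc i) then show ?case using trinc[of i] by simp
  qed simp
  have phstep: "ph (Suc i) < ph i" if "tr (Suc i) < hstep" for i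
  proof -
    have "ff (\<sigma> (tr i)) < hstep" using that unfolding trS .
    then obtain u where u: "\<sigma> (tr i) \<le> u" "u < ff (\<sigma> (tr i))" "as u \<in> NV0" using E12 by blast
    have "Qs S pw (cs (tr (Suc i))) < Qs S pw (cs (\<sigma> (tr i)))"
      unfolding trS by (rule E5[OF u(1) u(2) u(3)])
    moreover have "Qs S pw (cs (\<sigma> (tr (Suc i)))) \<le> Qs S pw (cs (tr (Suc i)))"
      by (rule E4) (use sig in blast)
    ultimately show ?thesis unfolding ph_def by simp
  qed
  have phlt: "i < j \<Longrightarrow> tr j < hstep \<Longrightarrow> ph j < ph i" for i j
  proof (induction j)
    case 0 then show ?case by simp
  next
    case (Suc j)
    have s: "ph (Suc j) < ph j" by (rule phstep) (rule Suc.prems(2))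
    show ?case
    proof (cases "i = j")
      case True then show ?thesis using s by simp
    next
      case False
      then have "i < j" using Suc.prems(1) by simp
      moreover have "tr j < hstep" using trinc[of j] Suc.prems(2) by simp
      ultimately have "ph j < ph i" by (rule Suc.IH)
      then show ?thesis using s by simp
    qed
  qed
  define n where "n = csize S (cs 0)"
  have phle: "nat (ph i) \<le> 2 * n" for i
  proof -
    have "ph i \<le> Qs S pw (cs 0)" unfolding ph_def by (rule E4) simp
    also have "\<dots> \<le> 2 * int n" unfolding n_def by (rule Qs_pw_le)
    finally show ?thesis by simp
  qed
  define C where "C = {i. tr i < hstep}"
  have finC: "finite C"
  proof (rule finite_subset)
    show "C \<subseteq> {..<hstep}" unfolding C_def using trge le_less_trans by blast
  qed simp
  have injC: "inj_on (\<lambda>i. nat (ph i)) C"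
  proof (rule inj_onI)
    fix i j assume ij: "i \<in> C" "j \<in> C" "nat (ph i) = nat (ph j)"
    have p0: "ph i \<ge> 0" "ph j \<ge> 0" unfolding ph_def using Qs_pw_nonneg by auto
    show "i = j"
    proof (rule ccontr)
      assume "i \<noteq> j"
      then consider "i < j" | "j < i" by linarith
      then show False
      proof cases
        case 1 then have "ph j < ph i" using phlt ij(2) unfolding C_def by blast
        then show False using ij(3) p0 by simp
      next
        case 2 then have "ph i < ph j" using phlt ij(1) unfolding C_def by blast
        then show False using ij(3) p0 by simp
      qed
    qed
  qed
  have rt: "rounds (\<lambda>te. tau ((\<lambda>c. NV RR) (cs te)) cs as te) \<sigma> = tr"
    unfolding tr_def NV_RR ff_def by simp
  have "RT_exec V S RR (\<lambda>c. NV RR) \<sigma> ZZ cs as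
      = (\<Sum>i. if i \<in> C then TC V S RR (\<lambda>c. NV RR) (cs (\<sigma> (tr i))) else 0)"
    unfolding RT_exec_def Let_def rt halting_step_eq C_def by simp
  also have "\<dots> = (\<Sum>i\<in>C. if i \<in> C then TC V S RR (\<lambda>c. NV RR) (cs (\<sigma> (tr i))) else 0)"
    by (rule suminf_finite[OF finC]) simp
  also have "\<dots> = (\<Sum>i\<in>C. TC V S RR (\<lambda>c. NV RR) (cs (\<sigma> (tr i))))" by simp
  also have "\<dots> \<le> (\<Sum>i\<in>C. ennreal (gN V (nat (ph i))))"
    unfolding ph_def by (intro sum_mono TC_bound V csize_pos)
  also have "\<dots> = ennreal (\<Sum>i\<in>C. gN V (nat (ph i)))"
    by (rule sum_ennreal) (rule gN_nonneg[OF V])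
  also have "(\<Sum>i\<in>C. gN V (nat (ph i))) = (\<Sum>p\<in>(\<lambda>i. nat (ph i)) ` C. gN V p)"
    by (rule sum.reindex[OF injC, symmetric, unfolded comp_def])
  also have "\<dots> \<le> (\<Sum>p\<le>2 * n. gN V p)"
    by (rule sum_mono2) (use phle gN_nonneg[OF V] in auto)
  also have "\<dots> \<le> real (2 * n + 1) * KR + 4 * real mm ^ 2 * V * KR"
    by (rule gsum[OF V])
  finally show ?thesis unfolding n_def by (simp add: ennreal_leI)
qed

end



theorem proposition5p4:
  fixes Sig :: "nat set" and \<psi> :: "conf \<Rightarrow> bool" and \<phi> :: "nat \<Rightarrow> real"
  assumes "finite Sig"
    and "modulo_predicate Sig \<psi>"
    and "\<forall>n. \<phi> n > 0"
    and "\<phi> \<in> \<Theta>(\<lambda>n. real n)"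
  shows "\<exists>S R Y0 Y1 F. crd S R Sig Y0 Y1 F \<and> halting_decides S R Sig Y0 Y1 F \<psi> \<and>
           (\<exists>C::real. \<exists>N. \<forall>n\<ge>N. RT_halt \<phi> S R Sig Y0 Y1 F \<psi> n \<le> ennreal (C * real n))"
proof -
  obtain a b m where m: "m > 0" and psi: "\<forall>x. supp_in Sig x \<longrightarrow>
      (\<psi> x \<longleftrightarrow> (\<Sum>s\<in>Sig. a s * int (x s)) mod m = b mod m)"
    using assms(2) unfolding modulo_predicate_def by blast
  interpret P: prot Sig a b m using assms(1) m by unfold_locales
  have psiX: "\<psi> (restrict_to Sig c0) \<longleftrightarrow>
      (\<Sum>s\<in>Sig. a s * int (restrict_to Sig c0 s)) mod m = b mod m" for c0
  proof -
    have "supp_in Sig (restrict_to Sig c0)" unfolding supp_in_def restrict_to_def by simp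
    then show ?thesis using psi by blast
  qed
  obtain c where c: "c > 0" and ev: "eventually (\<lambda>n. norm (\<phi> n) \<le> c * norm (real n)) at_top"
    using landau_o.bigE[OF bigthetaD1[OF assms(4)]] by blast
  then obtain N0 where N0: "\<And>n. n \<ge> N0 \<Longrightarrow> norm (\<phi> n) \<le> c * norm (real n)"
    unfolding eventually_at_top_linorder by blast
  show ?thesis
  proof (intro exI conjI)
    show "crd P.S P.RR Sig P.Y0 P.Y1 P.FF" by (rule P.crd_RR)
    show "halting_decides P.S P.RR Sig P.Y0 P.Y1 P.FF \<psi>"
      unfolding halting_decides_def
    proof (intro allI impI)
      fix x c0 cs as
      assume sx: "supp_in Sig x" and H: "valid_init P.S Sig P.FF c0 \<and> restrict_to Sig c0 = x \<and> cs 0 = c0 \<and>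
        execution P.RR cs as \<and> weakly_fair P.RR cs as"
      interpret E: pexec Sig a b m cs as
        using assms(1) m H by unfold_locales auto
      have "\<psi> x \<longleftrightarrow> E.X0 mod m = b mod m" using psiX[of c0] H unfolding E.X0_def by simp
      then show "halts_into P.RR (D P.Y0 P.Y1 (\<psi> x)) cs" using E.halts by simp
    qed
    show "\<forall>n\<ge>max N0 1. RT_halt \<phi> P.S P.RR Sig P.Y0 P.Y1 P.FF \<psi> n
      \<le> ennreal ((3 * P.KR + 4 * real P.mm ^ 2 * c * P.KR) * real n)"
    proof (intro allI impI)
      fix n assume n: "max N0 1 \<le> n"
      have V: "\<phi> n > 0" using assms(3) by blast
      have Vle: "\<phi> n \<le> c * real n" using N0[of n] n V by simp
      let ?A = "{(cs, as, \<sigma>). valid_init P.S Sig P.FF (cs 0) \<and> csize P.S (cs 0) = n \<and>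
               execution P.RR cs as \<and> weakly_fair P.RR cs as \<and> (\<forall>t::nat. (\<sigma>::nat \<Rightarrow> nat) t \<ge> t)}"
      have "RT_halt \<phi> P.S P.RR Sig P.Y0 P.Y1 P.FF \<psi> n \<le>
        (SUP (cs, as, \<sigma>)\<in>?A. RT_exec (\<phi> n) P.S P.RR (\<lambda>c. NV P.RR) \<sigma> (D P.Y0 P.Y1 (\<psi> (restrict_to Sig (cs 0)))) cs as)"
        unfolding RT_halt_def by (rule INF_lower) simp
      also have "\<dots> \<le> ennreal ((3 * P.KR + 4 * real P.mm ^ 2 * c * P.KR) * real n)"
      proof (rule SUP_least)
        fix p assume "p \<in> ?A"
        then obtain cs as \<sigma> where p: "p = (cs, as, \<sigma>)" and H: "valid_init P.S Sig P.FF (cs 0)"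
          "csize P.S (cs 0) = n" "execution P.RR cs as" "weakly_fair P.RR cs as" "\<forall>t. \<sigma> t \<ge> t"
          by (cases p) auto
        interpret E: pexec Sig a b m cs as
          using assms(1) m H by unfold_locales auto
        have eq: "\<psi> (restrict_to Sig (cs 0)) \<longleftrightarrow> E.X0 mod m = b mod m" using psiX[of "cs 0"] unfolding E.X0_def by simp
        have "RT_exec (\<phi> n) P.S P.RR (\<lambda>c. NV P.RR) \<sigma> (D P.Y0 P.Y1 (\<psi> (restrict_to Sig (cs 0)))) cs as
          \<le> ennreal (real (2 * n + 1) * P.KR + 4 * real P.mm ^ 2 * \<phi> n * P.KR)"
          unfolding eq using E.RT_bound[OF H(5) V] H(2) by simp
        also have "\<dots> \<le> ennreal ((3 * P.KR + 4 * real P.mm ^ 2 * c * P.KR) * real n)"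
        proof (rule ennreal_leI)
          have n1: "real n \<ge> 1" using n by simp
          have k: "P.KR \<ge> 1" by (rule P.KR_pos)
          have "real (2 * n + 1) * P.KR \<le> 3 * real n * P.KR"
            using n1 k by (intro mult_right_mono) auto
          moreover have "4 * real P.mm ^ 2 * \<phi> n * P.KR \<le> 4 * real P.mm ^ 2 * (c * real n) * P.KR"
            using Vle k by (intro mult_right_mono mult_left_mono) auto
          ultimately show "real (2 * n + 1) * P.KR + 4 * real P.mm ^ 2 * \<phi> n * P.KR
              \<le> (3 * P.KR + 4 * real P.mm ^ 2 * c * P.KR) * real n"
            by (simp add: algebra_simps)
        qed
        finally show "(case p of (cs, as, \<sigma>) \<Rightarrow> RT_exec (\<phi> n) P.S P.RR (\<lambda>c. NV P.RR) \<sigma>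
            (D P.Y0 P.Y1 (\<psi> (restrict_to Sig (cs 0)))) cs as) \<le> ennreal ((3 * P.KR + 4 * real P.mm ^ 2 * c * P.KR) * real n)"
          unfolding p by simp
      qed
      finally show "RT_halt \<phi> P.S P.RR Sig P.Y0 P.Y1 P.FF \<psi> n
        \<le> ennreal ((3 * P.KR + 4 * real P.mm ^ 2 * c * P.KR) * real n)" .
    qed
  qed
qed


end
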